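(* For each integer $n\ge0$ let $\theta^\Delta_n(x)=\sum_{k=0}^n\frac{(n+k)!}{2^k(n-k)!\,k!}(x)_{n-k}$, where $(x)_j=x(x-1)\cdots(x-j+1)$ and $(x)_0=1$. (i) The identity \[ \frac{e^{-i\pi x}}{2i\sin\pi x\,\Gamma(-x)}\int_{-\infty}^{(0+)}e^{\lambda}(-\lambda)^{-x-1}\frac{1}{\sqrt{1-2t}}\exp\big[\lambda(1-\sqrt{1-2t})\big]\,d\lambda=\sum_{n=0}^\infty\theta^\Delta_n(x)\frac{t^n}{n!} \] holds, where the series converges uniformly on each compact subset of $\mathbb{C}\times\{t:|t|<\tfrac12\}$. (ii) The generating function $f(x,t)$ in (i) satisfies \[ f_t(x+1,t)-2f_t(x,t)+xf(x-1,t)=0,\qquad (1-2t)f_t(x,t)+(x-1)f(x,t)-2xf(x-1,t)=0 . \]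
   Context: The integral is over a Hankel contour starting at $-\infty$ below the negative real axis, circling the origin counterclockwise and returning to $-\infty$ above the negative real axis; $(-\lambda)^{-x-1}$ uses the principal branch and $\sqrt{1-2t}$ is the principal branch (equal to $1$ at $t=0$). *)

theory Defs
  imports "HOL-Complex_Analysis.Complex_Analysis"
begin

definition falling_fact :: "complex \<Rightarrow> nat \<Rightarrow> complex" where
  "falling_fact x j = (\<Prod>i<j. x - of_nat i)"

definition theta_Delta :: "nat \<Rightarrow> complex \<Rightarrow> complex" where
  "theta_Delta n x = (\<Sum>k=0..n. of_real (fact (n + k) / (2 ^ k * fact (n - k) * fact k))
                                  * falling_fact x (n - k))"

definition gen_f :: "complex \<Rightarrow> complex \<Rightarrow> complex" where
  "gen_f x t = (\<Sum>n. theta_Delta n x * t ^ n / fact n)"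

text \<open>The power (-lambda)^(-x-1), with the branch that is real-valued (principal) on the
  upper side of the negative real axis and continuous along the Hankel contour, which
  encircles the origin and crosses the positive real axis; equivalently
  arg(-lambda) = arg(lambda) - pi with the principal arg of lambda.\<close>
definition hankel_pow :: "complex \<Rightarrow> complex \<Rightarrow> complex" where
  "hankel_pow x z = exp ((- x - 1) * (Ln z - \<i> * of_real pi))"

definition hankel_integrand :: "complex \<Rightarrow> complex \<Rightarrow> complex \<Rightarrow> complex" where
  "hankel_integrand x t z =
     exp z * hankel_pow x z * (1 / csqrt (1 - 2 * t)) * exp (z * (1 - csqrt (1 - 2 * t)))"

text \<open>It starts below the negative real axis, circles the origin
  counterclockwise and returns above the negative real axis; the Hankel integral
  is the limit R \<rightarrow> \<infinity>.\<close>
definition hankel_path :: "real \<Rightarrow> real \<Rightarrow> complex" where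
  "hankel_path R = linepath (- of_real R - \<i>) (1 - \<i>) +++
                   (linepath (1 - \<i>) (1 + \<i>) +++ linepath (1 + \<i>) (- of_real R + \<i>))"

end

theory Submission
  imports Defs "HOL-Real_Asymp.Real_Asymp"
begin

definition sq :: "complex \<Rightarrow> complex" where "sq t = csqrt (1 - 2 * t)"
definition cc :: "complex \<Rightarrow> complex" where "cc t = 2 - sq t"
definition FF :: "complex \<Rightarrow> complex \<Rightarrow> complex" where
  "FF x t = exp (x * Ln (cc t)) / sq t"

lemma sq_facts:
  assumes "norm t < 1/2"
  shows "Re (sq t) > 0" "norm (sq t - 1) < 1" "sq t \<noteq> 0" "Re (cc t) > 0"
        "norm (cc t - 1) < 1" "cc t \<noteq> 0" "(sq t)^2 = 1 - 2*t" "Re (1 - 2*t) > 0"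
        "cc t \<notin> \<real>\<^sub>\<le>\<^sub>0" "1 - 2*t \<notin> \<real>\<^sub>\<le>\<^sub>0"
proof -
  have R: "Re (1 - 2*t) > 0"
  proof -
    have "\<bar>Re t\<bar> \<le> norm t" by (rule abs_Re_le_cmod)
    thus ?thesis using assms by simp
  qed
  show "Re (1 - 2*t) > 0" by (fact R)
  show sq2: "(sq t)^2 = 1 - 2*t" by (simp add: sq_def)
  show P: "Re (sq t) > 0"
  proof (rule ccontr)
    assume "\<not> Re (sq t) > 0"
    with csqrt_principal[of "1 - 2*t"] have "Re (sq t) = 0" unfolding sq_def by auto
    hence "Re ((sq t)^2) \<le> 0" by (simp add: power2_eq_square)
    with sq2 R show False by simp
  qed
  thus nz: "sq t \<noteq> 0" by auto
  have "norm (sq t + 1) \<ge> Re (sq t + 1)" by (rule complex_Re_le_cmod)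
  hence g1: "norm (sq t + 1) > 1" using P by simp
  have "(sq t - 1) * (sq t + 1) = - 2 * t" using sq2 by (simp add: algebra_simps power2_eq_square)
  hence "norm (sq t - 1) * norm (sq t + 1) = 2 * norm t" by (metis norm_minus_cancel norm_mult mult_minus_left norm_numeral)
  hence "norm (sq t - 1) * norm (sq t + 1) < 1" using assms by simp
  moreover have "norm (sq t - 1) * 1 \<le> norm (sq t - 1) * norm (sq t + 1)"
    using g1 by (intro mult_left_mono) auto
  ultimately show n1: "norm (sq t - 1) < 1" by simp
  have "norm (cc t - 1) = norm (sq t - 1)" unfolding cc_def by (metis minus_diff_eq norm_minus_cancel one_add_one diff_diff_eq2 add_diff_cancel_left')
  thus n2: "norm (cc t - 1) < 1" using n1 by simp
  have "Re (cc t - 1) \<ge> - norm (cc t - 1)" using abs_Re_le_cmod[of "cc t - 1"] by linarith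
  thus "Re (cc t) > 0" using n2 by simp
  thus "cc t \<noteq> 0" "cc t \<notin> \<real>\<^sub>\<le>\<^sub>0" by (auto simp: complex_nonpos_Reals_iff)
  show "1 - 2*t \<notin> \<real>\<^sub>\<le>\<^sub>0" using R by (auto simp: complex_nonpos_Reals_iff)
qed

lemma sq_0 [simp]: "sq 0 = 1" and cc_0 [simp]: "cc 0 = 1"
  by (simp_all add: sq_def cc_def)

lemma has_deriv_sq:
  assumes "norm t < 1/2"
  shows "(sq has_field_derivative (- 1 / sq t)) (at t)"
proof -
  have "((\<lambda>t. csqrt (1 - 2*t)) has_field_derivative (inverse (2 * csqrt (1 - 2*t)) * (0 - 2 * 1))) (at t)"
    using sq_facts[OF assms]
    by (intro DERIV_chain2[OF has_field_derivative_csqrt] derivative_intros) auto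
  thus ?thesis using sq_facts[OF assms] by (simp add: sq_def[abs_def] field_simps)
qed

lemma has_deriv_FF:
  assumes "norm t < 1/2"
  shows "(FF x has_field_derivative
           (exp (x * Ln (cc t)) * (x / (cc t * (sq t)^2) + 1 / (sq t)^3))) (at t)"
proof -
  note sf = sq_facts[OF assms]
  have dc: "(cc has_field_derivative (1 / sq t)) (at t)"
    using has_deriv_sq[OF assms] unfolding cc_def[abs_def]
    by (auto intro!: derivative_eq_intros)
  have dL: "((\<lambda>t. Ln (cc t)) has_field_derivative (inverse (cc t) * (1 / sq t))) (at t)"
    by (rule DERIV_chain2[OF has_field_derivative_Ln dc]) (use sf in auto)
  have e: "((\<lambda>t. exp (x * Ln (cc t))) has_field_derivative exp (x * Ln (cc t)) * (x * (inverse (cc t) * (1 / sq t)))) (at t)"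
    by (rule DERIV_chain2[OF DERIV_exp DERIV_cmult[OF dL]])
  have "((\<lambda>t. exp (x * Ln (cc t)) / sq t) has_field_derivative
          ((exp (x * Ln (cc t)) * (x * (inverse (cc t) * (1 / sq t)))) * sq t - exp (x * Ln (cc t)) * (- 1 / sq t)) / (sq t * sq t)) (at t)"
    by (rule DERIV_divide[OF e has_deriv_sq[OF assms]]) (use sf in auto)
  thus ?thesis using sf unfolding FF_def[abs_def] by (simp add: field_simps power2_eq_square power3_eq_cube)
qed

lemma deriv_FF:
  assumes "norm t < 1/2"
  shows "deriv (FF x) t = exp (x * Ln (cc t)) * (x / (cc t * (sq t)^2) + 1 / (sq t)^3)"
  using has_deriv_FF[OF assms] by (rule DERIV_imp_deriv)

lemma holo_FF: "FF x holomorphic_on ball 0 (1/2)"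
proof -
  have "\<forall>t \<in> ball 0 (1/2). FF x field_differentiable at t"
    using has_deriv_FF unfolding field_differentiable_def by (metis mem_ball_0)
  thus ?thesis by (simp add: holomorphic_on_open field_differentiable_def)
qed

lemma FF_shift:
  assumes "norm t < 1/2"
  shows "FF (x - 1) t = exp (x * Ln (cc t)) / (cc t * sq t)"
        "FF (x + 1) t = exp (x * Ln (cc t)) * cc t / sq t"
  using sq_facts[OF assms]
  by (simp_all add: FF_def algebra_simps exp_diff exp_add exp_Ln)

lemma alg2:
  fixes s c E x :: complex
  assumes "s \<noteq> 0" "c \<noteq> 0" "c = 2 - s"
  shows "s^2 * (E * (x / (c * s^2) + 1 / s^3)) + (x - 1) * (E / s) - 2 * x * (E / (c * s)) = 0"
proof -
  have "s^2 * (E * (x / (c * s^2) + 1 / s^3)) + (x - 1) * (E / s) - 2 * x * (E / (c * s))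
     = E * x * (s + c - 2) / (c * s)"
    using assms(1,2) by (simp add: field_simps power2_eq_square power3_eq_cube)
  thus ?thesis using assms(3) by simp
qed

lemma alg1:
  fixes s c E x :: complex
  assumes "s \<noteq> 0" "c \<noteq> 0" "c = 2 - s"
  shows "E * c * ((x + 1) / (c * s^2) + 1 / s^3) - 2 * (E * (x / (c * s^2) + 1 / s^3))
       + x * (E / (c * s)) = 0"
proof -
  have "E * c * ((x + 1) / (c * s^2) + 1 / s^3) - 2 * (E * (x / (c * s^2) + 1 / s^3))
       + x * (E / (c * s)) = E * (c * (x + 1) * s + c * c - 2 * x * s - 2 * c + x * s * s) / (c * s^3)"
    using assms(1,2) by (simp add: field_simps power2_eq_square power3_eq_cube)
  also have "c * (x + 1) * s + c * c - 2 * x * s - 2 * c + x * s * s = 0"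
    unfolding assms(3) by (simp add: algebra_simps)
  finally show ?thesis by simp
qed

lemma ODE2:
  assumes "norm t < 1/2"
  shows "(1 - 2 * t) * deriv (FF x) t + (x - 1) * FF x t - 2 * x * FF (x - 1) t = 0"
proof -
  note sf = sq_facts[OF assms]
  have "(1 - 2 * t) * deriv (FF x) t + (x - 1) * FF x t - 2 * x * FF (x - 1) t
     = (sq t)^2 * (exp (x * Ln (cc t)) * (x / (cc t * (sq t)^2) + 1 / (sq t)^3)) + (x - 1) * (exp (x * Ln (cc t)) / sq t) - 2 * x * (exp (x * Ln (cc t)) / (cc t * sq t))"
    using sf by (simp add: deriv_FF[OF assms] FF_shift[OF assms]) (simp add: FF_def)
  also have "\<dots> = 0" using sf by (intro alg2) (auto simp: cc_def)
  finally show ?thesis .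
qed

lemma ODE1:
  assumes "norm t < 1/2"
  shows "deriv (FF (x + 1)) t - 2 * deriv (FF x) t + x * FF (x - 1) t = 0"
proof -
  note sf = sq_facts[OF assms]
  have e1: "exp ((x + 1) * Ln (cc t)) = exp (x * Ln (cc t)) * cc t"
    using sf by (simp add: algebra_simps exp_add)
  have "deriv (FF (x + 1)) t - 2 * deriv (FF x) t + x * FF (x - 1) t
     = exp (x * Ln (cc t)) * cc t * ((x + 1) / (cc t * (sq t)^2) + 1 / (sq t)^3) - 2 * (exp (x * Ln (cc t)) * (x / (cc t * (sq t)^2) + 1 / (sq t)^3))
       + x * (exp (x * Ln (cc t)) / (cc t * sq t))"
    by (simp add: deriv_FF[OF assms] FF_shift[OF assms] e1)
  also have "\<dots> = 0" using sf by (intro alg1) (auto simp: cc_def)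
  finally show ?thesis .
qed

definition rc :: "nat \<Rightarrow> nat \<Rightarrow> real" where
  "rc n k = fact (n + k) / (2 ^ k * fact (n - k) * fact k)"

lemma rc_0: "rc n 0 = 1" by (simp add: rc_def)

lemma rc_mid: "rc (Suc (m + 1 + p)) (Suc m) = rc (m + 1 + p) (Suc m) + real (m + 1 + p + Suc m) * rc (m + 1 + p) m"
proof -
  have e1: "Suc (m + 1 + p) - Suc m = Suc p" "m + 1 + p - Suc m = p" "m + 1 + p - m = Suc p" by auto
  have e2: "Suc (m + 1 + p) + Suc m = Suc (Suc (Suc (2*m+p)))" "m + 1 + p + Suc m = Suc (Suc (2*m+p))"
     "m + 1 + p + m = Suc (2*m+p)" by auto
  define Q where "Q = (fact (2*m+p) :: real) / (2^m * fact p * fact m)"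
  have a: "rc (Suc (m + 1 + p)) (Suc m) = ((2*m+p+3)*(2*m+p+2)*(2*m+p+1) / (2*(p+1)*(m+1))) * Q"
    unfolding rc_def e1 e2 Q_def by (simp add: field_simps)
  have b: "rc (m + 1 + p) (Suc m) = ((2*m+p+2)*(2*m+p+1) / (2*(m+1))) * Q"
    unfolding rc_def e1 e2 Q_def by (simp add: field_simps)
  have c: "rc (m + 1 + p) m = ((2*m+p+1) / (p+1)) * Q"
    unfolding rc_def e1 e2 Q_def by (simp add: field_simps)
  have d: "real (m + 1 + p + Suc m) = 2*m+p+2" by simp
  have "((2*m+p+3)*(2*m+p+2)*(2*m+p+1) / (2*(p+1)*(m+1))) = 
        ((2*m+p+2)*(2*m+p+1) / (2*(m+1))) + (2*m+p+2) * ((2*m+p+1) / (p+1)::real)"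
    by (simp add: field_simps)
  then show ?thesis unfolding a b c d by (simp add: algebra_simps)
qed

lemma rc_top: "rc (Suc n) (Suc n) = real (2*n+1) * rc n n"
proof -
  have e2: "Suc n + Suc n = Suc (Suc (2*n))" "n + n = 2*n" by auto
  define Q where "Q = (fact (2*n) :: real) / (2^n * fact n)"
  have a: "rc (Suc n) (Suc n) = ((2*n+2)*(2*n+1) / (2*(n+1))) * Q"
    unfolding rc_def e2 Q_def by (simp add: field_simps)
  have b: "rc n n = Q"
    unfolding rc_def e2 Q_def by (simp add: field_simps)
  have "((2*n+2)*(2*n+1) / (2*(n+1))) = real (2*n+1)"
    by (simp add: field_simps)
  then show ?thesis unfolding a b by simp
qed

lemma ff_Suc: "falling_fact x (Suc j) = falling_fact x j * (x - of_nat j)"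
  by (simp add: falling_fact_def)

lemma ff_shift: "x * falling_fact (x - 1) j = falling_fact x (Suc j)"
  unfolding falling_fact_def prod.lessThan_Suc_shift
  by (simp add: algebra_simps)

lemma ff_mul: "x * falling_fact x j = falling_fact x (Suc j) + of_nat j * falling_fact x j"
  by (simp add: ff_Suc algebra_simps)

lemma rc_rec:
  assumes "k \<le> Suc n"
  shows "rc (Suc n) k = (if k \<le> n then rc n k else 0) + (if k = 0 then 0 else real (n + k) * rc n (k - 1))"
proof (cases k)
  case 0 thus ?thesis by (simp add: rc_0)
next
  case (Suc m)
  show ?thesis
  proof (cases "k = Suc n")
    case True
    thus ?thesis using rc_top[of n] by (simp add: Suc)
  next
    case False
    with assms Suc obtain p where n: "n = m + 1 + p" by (metis add.commute le_Suc_eq less_eq_Suc_le nat_le_iff_add plus_1_eq_Suc)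
    show ?thesis using rc_mid[of m p] by (simp add: Suc n)
  qed
qed

lemma theta_alt: "theta_Delta n x = (\<Sum>k=0..n. of_real (rc n k) * falling_fact x (n - k))"
  by (simp add: theta_Delta_def rc_def)

lemma theta_rec:
  "theta_Delta (Suc n) x = (2 * of_nat n + 1 - x) * theta_Delta n x + 2 * x * theta_Delta n (x - 1)"
proof -
  have "theta_Delta (Suc n) x = (\<Sum>k=0..Suc n. (of_real (if k \<le> n then rc n k else 0) + of_real (if k = 0 then 0 else real (n + k) * rc n (k - 1))) * falling_fact x (Suc n - k))"
    unfolding theta_alt by (intro sum.cong refl, subst rc_rec) (simp, simp only: of_real_add)
  also have "\<dots> = (\<Sum>k=0..Suc n. of_real (if k \<le> n then rc n k else 0) * falling_fact x (Suc n - k))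
      + (\<Sum>k=0..Suc n. of_real (if k = 0 then 0 else real (n + k) * rc n (k - 1)) * falling_fact x (Suc n - k))"
    by (simp add: distrib_right sum.distrib)
  also have "(\<Sum>k=0..Suc n. of_real (if k \<le> n then rc n k else 0) * falling_fact x (Suc n - k))
      = (\<Sum>k=0..n. of_real (rc n k) * falling_fact x (Suc (n - k)))"
    by (simp add: sum.atLeast0_atMost_Suc Suc_diff_le)
  also have "(\<Sum>k=0..Suc n. of_real (if k = 0 then 0 else real (n + k) * rc n (k - 1)) * falling_fact x (Suc n - k))
      = (\<Sum>k=0..n. of_real (real (n + Suc k) * rc n k) * falling_fact x (n - k))"
    unfolding sum.atLeast0_atMost_Suc_shift by simp
  also have "(\<Sum>k=0..n. of_real (rc n k) * falling_fact x (Suc (n - k))) + (\<Sum>k=0..n. of_real (real (n + Suc k) * rc n k) * falling_fact x (n - k))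
     = (\<Sum>k=0..n. of_real (rc n k) * ((2 * of_nat n + 1 - x) * falling_fact x (n - k) + 2 * (x * falling_fact (x - 1) (n - k))))"
    unfolding sum.distrib[symmetric]
  proof (intro sum.cong refl)
    fix k assume k: "k \<in> {0..n}"
    have e: "of_nat (n - k) = (of_nat n - of_nat k :: complex)" using k by (simp add: of_nat_diff)
    show "of_real (rc n k) * falling_fact x (Suc (n - k)) + of_real (real (n + Suc k) * rc n k) * falling_fact x (n - k)
       = of_real (rc n k) * ((2 * of_nat n + 1 - x) * falling_fact x (n - k) + 2 * (x * falling_fact (x - 1) (n - k)))"
      unfolding ff_shift left_diff_distrib' distrib_right
      using ff_mul[of x "n - k"] e apply (simp add: algebra_simps)
      apply (drule arg_cong[where f="\<lambda>z. complex_of_real (rc n k) * z"])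
      by (simp add: algebra_simps)
  qed
  also have "\<dots> = (2 * of_nat n + 1 - x) * theta_Delta n x + 2 * x * theta_Delta n (x - 1)"
    unfolding theta_alt sum_distrib_left sum.distrib[symmetric]
    by (intro sum.cong refl) (simp add: algebra_simps)
  finally show ?thesis .
qed

definition AA :: "complex \<Rightarrow> complex fps" where "AA x = fps_expansion (FF x) 0"

lemma FF_exp: "FF x has_fps_expansion AA x"
  unfolding AA_def by (rule has_fps_expansion_fps_expansion[OF open_ball _ holo_FF]) simp

lemma AA_rec:
  "of_nat (Suc n) * (fps_nth (AA x) (Suc n)) = (2 * of_nat n - x + 1) * (fps_nth (AA x) n) + 2 * x * (fps_nth (AA (x - 1)) n)"
proof -
  define G where "G = (\<lambda>t. (1 - 2 * t) * deriv (FF x) t + (x - 1) * FF x t - 2 * x * FF (x - 1) t)"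
  have "G has_fps_expansion ((1 - fps_const 2 * fps_X) * fps_deriv (AA x) + fps_const (x - 1) * AA x - fps_const (2 * x) * AA (x - 1))"
    unfolding G_def
    by (intro has_fps_expansion_diff has_fps_expansion_add has_fps_expansion_mult has_fps_expansion_cmult_left
           has_fps_expansion_deriv FF_exp has_fps_expansion_1 has_fps_expansion_fps_X) 
  hence "((1 - fps_const 2 * fps_X) * fps_deriv (AA x) + fps_const (x - 1) * AA x - fps_const (2 * x) * AA (x - 1)) $ n
       = (deriv ^^ n) G 0 / fact n" by (rule fps_nth_fps_expansion)
  also have "(deriv ^^ n) G 0 = (deriv ^^ n) (\<lambda>_. 0) 0"
  proof (rule higher_deriv_cong_ev[OF _ refl])
    have "eventually (\<lambda>t. t \<in> ball 0 (1/2)) (nhds (0::complex))"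
      by (intro eventually_nhds_in_open) auto
    thus "eventually (\<lambda>t. G t = 0) (nhds 0)"
      by eventually_elim (simp add: G_def ODE2)
  qed
  finally have "((1 - fps_const 2 * fps_X) * fps_deriv (AA x) + fps_const (x - 1) * AA x - fps_const (2 * x) * AA (x - 1)) $ n = 0"
    by simp
  thus ?thesis by (cases n) (simp_all add: algebra_simps)
qed

lemma AA_theta: "fps_nth (AA x) n = theta_Delta n x / fact n"
proof (induction n arbitrary: x)
  case 0
  have "fps_nth (AA x) 0 = FF x 0" using fps_nth_fps_expansion[OF FF_exp, of x 0] by simp
  thus ?case by (simp add: FF_def theta_Delta_def falling_fact_def)
next
  case (Suc n)
  have "of_nat (Suc n) * (fps_nth (AA x) (Suc n)) = (2 * of_nat n - x + 1) * (theta_Delta n x / fact n) + 2 * x * (theta_Delta n (x - 1) / fact n)"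
    using AA_rec[of n x] Suc.IH by simp
  also have "\<dots> = theta_Delta (Suc n) x / fact n"
    by (simp add: theta_rec field_simps)
  finally have h: "of_nat (Suc n) * (fps_nth (AA x) (Suc n)) = theta_Delta (Suc n) x / fact n" .
  have "theta_Delta (Suc n) x = of_nat (Suc n) * fact n * (fps_nth (AA x) (Suc n))"
    using h by (simp add: field_simps del: of_nat_Suc)
  thus ?case by (simp del: of_nat_Suc)
qed

lemma gen_f_sums:
  assumes "norm t < 1/2"
  shows "(\<lambda>n. theta_Delta n x * t ^ n / fact n) sums FF x t"
proof -
  have "(\<lambda>n. (deriv ^^ n) (FF x) 0 / fact n * (t - 0) ^ n) sums FF x t"
    by (rule holomorphic_power_series[OF holo_FF]) (use assms in simp)
  moreover have "(deriv ^^ n) (FF x) 0 / fact n = theta_Delta n x / fact n" for n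
    using fps_nth_fps_expansion[OF FF_exp, of x n] AA_theta[of x n] by simp
  ultimately show ?thesis by simp
qed

lemma gen_f_eq: "norm t < 1/2 \<Longrightarrow> gen_f x t = FF x t"
  using gen_f_sums unfolding gen_f_def by (rule sums_unique[symmetric])

lemma Ln_cc_bound:
  assumes "norm t < 1/2"
  shows "norm (Ln (cc t)) \<le> 3"
proof -
  note sf = sq_facts[OF assms]
  have "norm (1 - 2*t) \<le> 1 + norm (2*t)" by (metis norm_one norm_triangle_ineq4)
  hence n12: "norm (1 - 2*t) < 2" using assms by simp
  have ns: "norm (sq t) < 1.5"
  proof -
    have "norm (sq t) = sqrt (norm (1 - 2*t))" by (simp add: sq_def)
    also have "\<dots> < sqrt 2.25" using n12 by (intro real_sqrt_less_mono) simp
    also have "sqrt 2.25 = 1.5" by (rule real_sqrt_unique) (auto simp: power2_eq_square)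
    finally show ?thesis .
  qed
  have "Re (sq t) \<le> norm (sq t)" by (rule complex_Re_le_cmod)
  hence "Re (cc t) > 1/2" using ns by (simp add: cc_def)
  hence lo: "norm (cc t) > 1/2" using complex_Re_le_cmod[of "cc t"] by linarith
  have "norm (cc t) \<le> norm (cc t - 1) + 1" by (metis norm_one norm_triangle_ineq diff_add_cancel)
  hence hi: "norm (cc t) < 2" using sf by simp
  have a1: "ln (norm (cc t)) < ln 2" using hi lo by (intro ln_less_cancel_iff[THEN iffD2]) auto
  have a2: "ln (norm (cc t)) > ln (1/2)" using lo by (intro ln_less_cancel_iff[THEN iffD2]) auto
  have a3: "ln (1/2::real) = - ln 2" by (simp add: ln_div)
  have a4: "ln (2::real) < 1" using ln_2_less_1 by simp
  have a5: "Re (Ln (cc t)) = ln (norm (cc t))" using sf by simp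
  have l1: "\<bar>Re (Ln (cc t))\<bar> < 1" unfolding a5 using a1 a2 a3 a4 by linarith
  have l2: "\<bar>Im (Ln (cc t))\<bar> < pi/2" using sf by (intro Re_Ln_pos_lt_imp) auto
  have "norm (Ln (cc t)) \<le> \<bar>Re (Ln (cc t))\<bar> + \<bar>Im (Ln (cc t))\<bar>" by (rule cmod_le)
  thus ?thesis using l1 l2 pi_less_4 by linarith
qed

lemma FF_bound:
  assumes "norm t < 1/2"
  shows "norm (FF x t) \<le> exp (3 * norm x) / sqrt (1 - 2 * norm t)"
proof -
  note sf = sq_facts[OF assms]
  have "norm (exp (x * Ln (cc t))) = exp (Re (x * Ln (cc t)))" by simp
  also have "\<dots> \<le> exp (norm (x * Ln (cc t)))" by (subst exp_le_cancel_iff) (rule complex_Re_le_cmod)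
  also have "\<dots> \<le> exp (3 * norm x)"
    using Ln_cc_bound[OF assms] by (simp add: norm_mult mult.commute mult_left_mono)
  finally have e: "norm (exp (x * Ln (cc t))) \<le> exp (3 * norm x)" .
  have "norm (1 - 2*t) \<ge> 1 - norm (2*t)" by (metis norm_one norm_triangle_ineq2)
  hence "norm (1 - 2*t) \<ge> 1 - 2 * norm t" by simp
  hence s: "norm (sq t) \<ge> sqrt (1 - 2 * norm t)" by (simp add: sq_def)
  have sp: "sqrt (1 - 2 * norm t) > 0" using assms by simp
  have "norm (FF x t) = norm (exp (x * Ln (cc t))) / norm (sq t)" by (simp add: FF_def norm_divide)
  also have "\<dots> \<le> exp (3 * norm x) / sqrt (1 - 2 * norm t)"
    using e s sp by (intro frac_le) auto
  finally show ?thesis .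
qed

lemma coeff_bound:
  assumes "0 < \<rho>" "\<rho> < 1/2"
  shows "norm (theta_Delta n x / fact n) \<le> exp (3 * norm x) / sqrt (1 - 2 * \<rho>) / \<rho> ^ n"
proof -
  have hb: "FF x holomorphic_on ball 0 \<rho>" using holo_FF by (rule holomorphic_on_subset) (use assms in auto)
  have cb: "continuous_on (cball 0 \<rho>) (FF x)"
    using holomorphic_on_imp_continuous_on[OF holo_FF] by (rule continuous_on_subset) (use assms in auto)
  have "norm ((deriv ^^ n) (FF x) 0) \<le> fact n * (exp (3 * norm x) / sqrt (1 - 2 * \<rho>)) / \<rho> ^ n"
  proof (rule Cauchy_inequality[OF hb cb assms(1)])
    fix t :: complex assume "norm (0 - t) = \<rho>"
    hence nt: "norm t = \<rho>" by simp
    show "norm (FF x t) \<le> exp (3 * norm x) / sqrt (1 - 2 * \<rho>)"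
      using FF_bound[of t x] nt assms by simp
  qed
  moreover have "(deriv ^^ n) (FF x) 0 / fact n = theta_Delta n x / fact n"
    using fps_nth_fps_expansion[OF FF_exp, of x n] AA_theta[of x n] by simp
  ultimately show ?thesis by (simp add: norm_divide field_simps)
qed

lemma unif_conv:
  assumes K: "compact K" "K \<subseteq> UNIV \<times> ball 0 (1/2)"
  shows "uniform_limit K (\<lambda>N (x, t). \<Sum>n<N. theta_Delta n x * t ^ n / fact n)
                          (\<lambda>(x, t). gen_f x t) sequentially"
proof -
  obtain X where X0: "\<forall>p\<in>K. norm p \<le> X"
    using compact_imp_bounded[OF K(1)] unfolding bounded_iff by blast
  have X: "\<forall>p\<in>K. norm (fst p) \<le> X"
  proof
    fix p assume "p \<in> K"
    hence "norm p \<le> X" using X0 by blast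
    thus "norm (fst p) \<le> X" using norm_fst_le[of "fst p" "snd p"] by simp
  qed
  obtain r where r: "0 \<le> r" "r < 1/2" "\<forall>p\<in>K. norm (snd p) \<le> r"
  proof (cases "K = {}")
    case True thus ?thesis using that[of 0] by simp
  next
    case False
    have "compact ((\<lambda>p. norm (snd p)) ` K)"
      by (intro compact_continuous_image continuous_intros K)
    then obtain m where m: "m \<in> (\<lambda>p. norm (snd p)) ` K" "\<forall>y \<in> (\<lambda>p. norm (snd p)) ` K. y \<le> m"
      using compact_attains_sup[of "(\<lambda>p. norm (snd p)) ` K"] False by blast
    from m(1) obtain p where p: "p \<in> K" "m = norm (snd p)" by blast
    have "m < 1/2" using p K(2) by (auto simp: mem_Times_iff)
    thus ?thesis using that[of m] m p by auto
  qed
  define \<rho> where "\<rho> = (r + 1/2) / 2"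
  have \<rho>: "0 < \<rho>" "\<rho> < 1/2" "r < \<rho>" using r by (auto simp: \<rho>_def)
  define f where "f = (\<lambda>n (p :: complex \<times> complex). theta_Delta n (fst p) * snd p ^ n / fact n)"
  define M where "M = (\<lambda>n. exp (3 * X) / sqrt (1 - 2 * \<rho>) * (r / \<rho>) ^ n)"
  have "uniform_limit K (\<lambda>n p. \<Sum>i<n. f i p) (\<lambda>p. suminf (\<lambda>i. f i p)) sequentially"
  proof (rule Weierstrass_m_test)
    fix n p assume p: "p \<in> K"
    have "norm (f n p) = norm (theta_Delta n (fst p) / fact n) * norm (snd p) ^ n"
      by (simp add: f_def norm_mult norm_divide norm_power)
    also have "\<dots> \<le> (exp (3 * norm (fst p)) / sqrt (1 - 2 * \<rho>) / \<rho> ^ n) * r ^ n"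
      using p r \<rho> by (intro mult_mono coeff_bound \<rho> power_mono) auto
    also have "\<dots> \<le> (exp (3 * X) / sqrt (1 - 2 * \<rho>) / \<rho> ^ n) * r ^ n"
      using p X \<rho> r by (intro mult_right_mono divide_right_mono) auto
    also have "\<dots> = M n" by (simp add: M_def power_divide)
    finally show "norm (f n p) \<le> M n" .
  next
    show "summable M" unfolding M_def
      using \<rho> r by (intro summable_mult summable_geometric) auto
  qed
  moreover have "(\<lambda>n p. \<Sum>i<n. f i p) = (\<lambda>N (x, t). \<Sum>n<N. theta_Delta n x * t ^ n / fact n)"
    by (auto simp: fun_eq_iff f_def)
  moreover have "(\<lambda>p. suminf (\<lambda>i. f i p)) = (\<lambda>(x, t). gen_f x t)"
    by (auto simp: fun_eq_iff f_def gen_f_def)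
  ultimately show ?thesis by simp
qed

lemma powr_exp_0: fixes a p :: real assumes "a > 0" shows "((\<lambda>R. R powr p * exp (-a*R)) \<longlongrightarrow> 0) at_top"
  using assms by real_asymp
lemma powr_exp_0': fixes a p :: real assumes "a > 0" shows "((\<lambda>R. (R + 1) powr p * exp (-a*R)) \<longlongrightarrow> 0) at_top"
  using assms by real_asymp

lemma gamma_tendsto:
  assumes w: "Re w > 0"
  shows "((\<lambda>b. contour_integral (linepath 0 (of_real b)) (\<lambda>v. v powr (w - 1) / exp v)) \<longlongrightarrow> Gamma w) at_top"
proof -
  define f where "f = (\<lambda>t::real. of_real t powr (w - 1) / of_real (exp t) :: complex)"
  have ai0: "f absolutely_integrable_on {0<..}"
    unfolding f_def by (rule absolutely_integrable_Gamma_integral'[OF w])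
  have ai: "f absolutely_integrable_on {0..}"
  proof (subst absolutely_integrable_spike_set_eq)
    show "negligible {x \<in> {0..} - {0<..}. f x \<noteq> 0}"
      by (rule negligible_subset[of "{0}"]) auto
    show "negligible {x \<in> {0<..} - {0..}. f x \<noteq> 0}" by (rule negligible_subset[of "{}"]) auto
  qed (fact ai0)
  have lim: "((\<lambda>b. LINT x:{0..b}|lebesgue. f x) \<longlongrightarrow> (LINT x:{0..}|lebesgue. f x)) at_top"
    by (rule tendsto_set_lebesgue_integral_at_top) (use ai in auto)
  have "(LINT x:{0..}|lebesgue. f x) = integral {0..} f"
    by (rule set_lebesgue_integral_eq_integral(2)[OF ai])
  also have "\<dots> = Gamma w" unfolding f_def by (rule integral_unique[OF Gamma_integral_complex[OF w]])
  finally have lim2: "((\<lambda>b. LINT x:{0..b}|lebesgue. f x) \<longlongrightarrow> Gamma w) at_top" using lim by simp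
  show ?thesis
  proof (rule Lim_transform_eventually[OF lim2])
    show "eventually (\<lambda>b. (LINT x:{0..b}|lebesgue. f x) = contour_integral (linepath 0 (of_real b)) (\<lambda>v. v powr (w - 1) / exp v)) at_top"
      using eventually_gt_at_top[of 0]
    proof eventually_elim
      case (elim b)
      have aib: "f absolutely_integrable_on {0..b}"
        by (rule set_integrable_subset[OF ai]) auto
      have "(LINT x:{0..b}|lebesgue. f x) = integral {0..b} f"
        by (rule set_lebesgue_integral_eq_integral(2)[OF aib])
      also have "\<dots> = contour_integral (linepath 0 (of_real b)) (\<lambda>v. v powr (w - 1) / exp v)"
        using elim by (subst contour_integral_linepath_Reals_eq) (auto simp: f_def exp_of_real)
      finally show ?case .
    qed
  qed
qed

lemma Ln_ofreal_mult:
  assumes "r > 0" "z \<noteq> 0"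
  shows "Ln (of_real r * z) = of_real (ln r) + Ln z"
proof -
  have "of_real r * z = exp (of_real (ln r) + Ln z)"
    using assms by (simp add: exp_add exp_of_real)
  hence "Ln (of_real r * z) = Ln (exp (of_real (ln r) + Ln z))" by simp
  also have "\<dots> = of_real (ln r) + Ln z"
    using assms mpi_less_Im_Ln[of z] Im_Ln_le_pi[of z] by (intro Ln_exp) auto
  finally show ?thesis .
qed

lemma powr_ofreal_mult:
  fixes z a :: complex
  assumes "r > 0"
  shows "(of_real r * z) powr a = exp (a * of_real (ln r)) * z powr a"
proof (cases "z = 0")
  case False
  have nz: "of_real r * z \<noteq> 0" using assms False by simp
  show ?thesis unfolding powr_def using nz False
    by (simp add: Ln_ofreal_mult[OF assms False] exp_add distrib_left)
qed simp

lemma norm_powr_bound: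
  "norm (z powr a) \<le> norm z powr Re a * exp (\<bar>Im a\<bar> * pi)"
proof -
  have "norm (z powr a) = norm z powr Re a * exp (- Im a * Arg z)" by (rule norm_powr_complex)
  also have "exp (- Im a * Arg z) \<le> exp (\<bar>Im a\<bar> * pi)"
  proof -
    have "\<bar>Arg z\<bar> \<le> pi" using mpi_less_Arg[of z] Arg_le_pi[of z] by linarith
    hence "- Im a * Arg z \<le> \<bar>Im a\<bar> * pi"
    proof -
      have "\<bar>Im a\<bar> * \<bar>Arg z\<bar> \<le> \<bar>Im a\<bar> * pi" using \<open>\<bar>Arg z\<bar> \<le> pi\<close> by (intro mult_left_mono) auto
      moreover have "- Im a * Arg z \<le> \<bar>Im a\<bar> * \<bar>Arg z\<bar>"
        using abs_ge_self[of "- Im a * Arg z"] by (simp add: abs_mult)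
      ultimately show ?thesis by linarith
    qed
    thus ?thesis by simp
  qed
  hence "norm z powr Re a * exp (- Im a * Arg z) \<le> norm z powr Re a * exp (\<bar>Im a\<bar> * pi)"
    by (intro mult_left_mono) auto
  finally show ?thesis .
qed

lemma cauchy_halfplane:
  fixes f :: "complex \<Rightarrow> complex"
  assumes "a \<noteq> 0" "continuous_on {z. a \<bullet> z \<le> b} f"
    "\<And>z. a \<bullet> z < b \<Longrightarrow> f field_differentiable at z"
    "valid_path g" "path_image g \<subseteq> {z. a \<bullet> z \<le> b}" "pathfinish g = pathstart g"
  shows "(f has_contour_integral 0) g"
  by (rule Cauchy_theorem_convex[where K = "{}"]) (use assms in \<open>auto simp: convex_halfspace_le\<close>)

lemma poly3:
  fixes f :: "complex \<Rightarrow> complex"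
  assumes "(f has_contour_integral 0) (linepath a b +++ linepath b c +++ linepath c a)"
    "continuous_on (closed_segment a b) f" "continuous_on (closed_segment b c) f" "continuous_on (closed_segment c a) f"
  shows "contour_integral (linepath a b) f + contour_integral (linepath b c) f + contour_integral (linepath c a) f = 0"
proof -
  have i: "f contour_integrable_on linepath a b" "f contour_integrable_on linepath b c" "f contour_integrable_on linepath c a"
    using assms by (auto intro: contour_integrable_continuous_linepath)
  have "contour_integral (linepath a b +++ linepath b c +++ linepath c a) f = 0"
    using assms(1) by (rule contour_integral_unique)
  thus ?thesis using i by (simp add: contour_integrable_joinI add.assoc)
qed

lemma poly5:
  fixes f :: "complex \<Rightarrow> complex"
  assumes "(f has_contour_integral 0) (linepath a b +++ linepath b c +++ linepath c d +++ linepath d e +++ linepath e a)"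
    "continuous_on (closed_segment a b) f" "continuous_on (closed_segment b c) f" "continuous_on (closed_segment c d) f"
    "continuous_on (closed_segment d e) f" "continuous_on (closed_segment e a) f"
  shows "contour_integral (linepath a b) f + contour_integral (linepath b c) f + contour_integral (linepath c d) f
        + contour_integral (linepath d e) f + contour_integral (linepath e a) f = 0"
proof -
  have i: "f contour_integrable_on linepath a b" "f contour_integrable_on linepath b c" "f contour_integrable_on linepath c d"
     "f contour_integrable_on linepath d e" "f contour_integrable_on linepath e a"
    using assms by (auto intro: contour_integrable_continuous_linepath)
  have "contour_integral (linepath a b +++ linepath b c +++ linepath c d +++ linepath d e +++ linepath e a) f = 0"
    using assms(1) by (rule contour_integral_unique)
  thus ?thesis using i by (simp add: contour_integrable_joinI add.assoc)
qed

lemma cont_powr_lin: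
  fixes k b :: complex
  assumes "Re b > 0" "\<And>z. z \<in> S \<Longrightarrow> k * z \<notin> \<real>\<^sub>\<le>\<^sub>0 \<or> z = 0"
  shows "continuous_on S (\<lambda>z. (k * z) powr b)"
  unfolding continuous_on_def
proof
  fix x assume x: "x \<in> S"
  have "((\<lambda>z. k * z) \<longlongrightarrow> k * x) (at x within S)" by (intro tendsto_intros)
  moreover have "k * x \<notin> \<real>\<^sub>\<le>\<^sub>0 \<or> (k * x = 0 \<and> Re b > 0)" using assms x by auto
  ultimately show "((\<lambda>z. (k * z) powr b) \<longlongrightarrow> (k * x) powr b) (at x within S)"
    by (intro tendsto_powr_complex') auto
qed

lemma interior_left: "interior {z::complex. 1 \<bullet> z \<le> 0} = {z. Re z < 0}"
  by (subst interior_halfspace_le) auto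

lemma gamma_c_tendsto:
  fixes c w :: complex
  assumes c: "Re c > 0" and w: "Re w > 1"
  shows "((\<lambda>R. contour_integral (linepath (- of_real R) 0) (\<lambda>z. exp (c * z) * (-z) powr (w - 1)))
            \<longlongrightarrow> exp (- w * Ln c) * Gamma w) at_top"
proof -
  define q where "q = (\<lambda>z. exp (c * z) * (-z) powr (w - 1))"
  define gg where "gg = (\<lambda>v::complex. v powr (w - 1) / exp v)"
  define S where "S = {z::complex. 1 \<bullet> z \<le> 0}"
  have S_eq: "S = {z. Re z \<le> 0}" by (simp add: S_def)
  have c0: "c \<noteq> 0" using c by auto
  have cR: "c \<notin> \<real>\<^sub>\<le>\<^sub>0" using c by (auto simp: complex_nonpos_Reals_iff)
  have wpos: "Re (w - 1) > 0" using w by simp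
  have p1: "continuous_on S (\<lambda>z. (-1 * z) powr (w - 1))"
    using wpos by (rule cont_powr_lin) (auto simp: S_eq complex_nonpos_Reals_iff complex_eq_iff)
  have contq: "continuous_on S q"
    unfolding q_def using p1 by (intro continuous_on_mult) (auto intro!: continuous_intros)
  have diffq: "q field_differentiable at z" if "1 \<bullet> z < 0" for z
  proof -
    have "q holomorphic_on {z. Re z < 0}" unfolding q_def
      by (intro holomorphic_intros) (auto simp: complex_nonpos_Reals_iff)
    moreover have "open {z::complex. Re z < 0}" by (rule open_halfspace_Re_lt)
    ultimately show ?thesis using that by (auto intro: holomorphic_on_imp_differentiable_at)
  qed
  have p2: "continuous_on {z. Re z \<ge> 0} (\<lambda>z. (1 * z) powr (w - 1))"
    using wpos by (rule cont_powr_lin) (auto simp: complex_nonpos_Reals_iff complex_eq_iff)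
  have contg: "continuous_on {z. Re z \<ge> 0} gg"
    unfolding gg_def using p2 by (intro continuous_on_divide) (auto intro!: continuous_intros)
  define e where "e = exp (- w * Ln c)"
  define J where "J = (\<lambda>b::real. contour_integral (linepath 0 (of_real b)) gg)"
  define B where "B = (\<lambda>R::real. contour_integral (linepath (- of_real R) (- of_real (R * norm c) / c)) q)"
  have main: "contour_integral (linepath (- of_real R) 0) q = B R + e * J (R * norm c)" if R: "R > 0" for R
  proof -
    define b where "b = R * norm c"
    have b: "b > 0" using R c0 by (simp add: b_def)
    define P where "P = - of_real b / c"
    have cP: "c * P = - of_real b" using c0 by (simp add: P_def)
    have ReP: "Re P < 0"
    proof -
      have "Re P = - (b * Re c) / ((Re c)^2 + (Im c)^2)"
        by (simp add: P_def Re_divide)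
      moreover have "(Re c)^2 + (Im c)^2 > 0" using c by (simp add: add_pos_nonneg)
      moreover have "b * Re c > 0" using b c by simp
      ultimately show ?thesis by (simp add: divide_neg_pos)
    qed
    have inS: "0 \<in> S" "- of_real R \<in> S" "P \<in> S" using R ReP by (auto simp: S_eq)
    have seg: "closed_segment u v \<subseteq> S" if "u \<in> S" "v \<in> S" for u v
      using that by (intro closed_segment_subset) (auto simp: S_eq convex_halfspace_Re_le)
    have "(q has_contour_integral 0) (linepath 0 (- of_real R) +++ linepath (- of_real R) P +++ linepath P 0)"
      by (rule cauchy_halfplane[of 1 0 q]) (use contq diffq inS seg in \<open>auto simp: S_def path_image_join\<close>)
    hence sum0: "contour_integral (linepath 0 (- of_real R)) q + contour_integral (linepath (- of_real R) P) q
          + contour_integral (linepath P 0) q = 0"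
      by (rule poly3) (use contq inS seg in \<open>auto intro: continuous_on_subset\<close>)
    have rev: "contour_integral (linepath (- of_real R) 0) q = - contour_integral (linepath 0 (- of_real R)) q"
      by (rule contour_integral_reverse_linepath) (use contq inS seg in \<open>auto intro: continuous_on_subset\<close>)
    have Jhas: "(gg has_contour_integral J b) (linepath 0 (of_real b))"
      unfolding J_def
    proof (rule has_contour_integral_integral, rule contour_integrable_continuous_linepath)
      have "closed_segment 0 (of_real b) \<subseteq> {z. Re z \<ge> 0}"
        using b by (intro closed_segment_subset) (auto simp: convex_halfspace_Re_ge)
      thus "continuous_on (closed_segment 0 (of_real b)) gg" by (rule continuous_on_subset[OF contg])
    qed
    have "((\<lambda>u. gg (linepath 0 (of_real b) u) * (of_real b - 0)) has_integral J b) {0..1}"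
      using Jhas by (simp add: has_contour_integral_linepath)
    hence "((\<lambda>u. - e * (gg (linepath 0 (of_real b) u) * (of_real b - 0))) has_integral (- e * J b)) {0..1}"
      by (rule has_integral_mult_right)
    hence "((\<lambda>u. q (linepath 0 P u) * (P - 0)) has_integral (- e * J b)) {0..1}"
    proof (rule has_integral_eq[rotated])
      fix u :: real assume u: "u \<in> {0..1}"
      show "- e * (gg (linepath 0 (of_real b) u) * (of_real b - 0)) = q (linepath 0 P u) * (P - 0)"
      proof (cases "u = 0")
        case True thus ?thesis by (simp add: q_def gg_def linepath_def)
      next
        case False
        hence u0: "u > 0" using u by auto
        have ub: "u * b > 0" using u0 b by simp
        have l1: "linepath 0 (of_real b) u = of_real (u * b)" by (simp add: linepath_def scaleR_conv_of_real)
        have l2: "linepath 0 P u = of_real u * P" by (simp add: linepath_def scaleR_conv_of_real)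
        have m: "- (of_real u * P) = of_real (u * b) * inverse c" by (simp add: P_def field_simps)
        have pw: "(of_real (u * b) * inverse c) powr (w - 1) = exp ((w - 1) * of_real (ln (u * b))) * exp (- (w - 1) * Ln c)"
        proof -
          have ic: "(inverse c) powr (w - 1) = exp (- (w - 1) * Ln c)" using c0 cR by (simp add: powr_def Ln_inverse algebra_simps)
          show ?thesis by (simp only: powr_ofreal_mult[OF ub] ic)
        qed
        have pw2: "of_real (u * b) powr (w - 1) = exp ((w - 1) * of_real (ln (u * b)))"
          using ub u0 b by (simp add: powr_def Ln_of_real[OF ub] del: of_real_mult)
        have "c * (of_real u * P) = of_real u * (c * P)" by (simp add: mult.left_commute)
        also have "\<dots> = - of_real (u * b)" using cP by simp
        finally have ec: "exp (c * (of_real u * P)) = exp (- of_real (u * b))" by simp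
        have ic: "inverse c = exp (- Ln c)" using c0 by (simp add: exp_minus)
        have ee: "e = exp (- (w - 1) * Ln c) * exp (- Ln c)" unfolding e_def
          by (simp add: exp_add[symmetric] algebra_simps)
        show ?thesis
          unfolding l1 l2 q_def gg_def m pw pw2 ec
          using c0 by (simp add: P_def ee ic field_simps exp_minus)
      qed
    qed
    hence "(q has_contour_integral (- e * J b)) (linepath 0 P)"
      by (simp add: has_contour_integral_linepath)
    hence "(q has_contour_integral (e * J b)) (linepath P 0)"
      using has_contour_integral_reverse_linepath by fastforce
    hence CP: "contour_integral (linepath P 0) q = e * J b" by (rule contour_integral_unique)
    show ?thesis unfolding rev B_def using sum0 CP
      by (simp add: P_def b_def algebra_simps) (metis add.commute add_eq_0_iff2 add.left_commute)
  qed
  have Bbound: "norm (B R) \<le> exp (- R * Re c) * (R powr (Re w - 1) * exp (\<bar>Im w\<bar> * pi)) * (2 * R)"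
    if R: "R > 0" for R
  proof -
    define P where "P = - of_real (R * norm c) / c"
    have nP: "norm P = R" using R c0 by (simp add: P_def norm_divide norm_mult)
    have cP: "c * P = - of_real (R * norm c)" using c0 by (simp add: P_def)
    have ReP: "Re P \<le> 0"
    proof -
      have "Re P = - (R * norm c * Re c) / ((Re c)^2 + (Im c)^2)"
        by (simp add: P_def Re_divide)
      moreover have "(Re c)^2 + (Im c)^2 > 0" using c by (simp add: add_pos_nonneg)
      moreover have "R * norm c * Re c > 0" using R c c0 by simp
      ultimately show ?thesis by (simp add: divide_neg_pos)
    qed
    have seg: "closed_segment (- of_real R) P \<subseteq> S"
      using R ReP by (intro closed_segment_subset) (auto simp: S_eq convex_halfspace_Re_le)
    have int: "q contour_integrable_on linepath (- of_real R) P"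
      by (rule contour_integrable_continuous_linepath) (rule continuous_on_subset[OF contq seg])
    have bnd: "norm (q z) \<le> exp (- R * Re c) * (R powr (Re w - 1) * exp (\<bar>Im w\<bar> * pi))"
      if z: "z \<in> closed_segment (- of_real R) P" for z
    proof -
      from z obtain u where u: "0 \<le> u" "u \<le> 1" and zu: "z = (1 - u) *\<^sub>R (- of_real R) + u *\<^sub>R P"
        unfolding closed_segment_def by blast
      have cz: "c * z = - of_real ((1 - u) * R) * c + of_real u * (c * P)"
        unfolding zu by (simp add: scaleR_conv_of_real algebra_simps)
      have "Re c \<le> norm c" by (rule complex_Re_le_cmod)
      hence "Re (c * z) = - ((1 - u) * R) * Re c - u * (R * norm c)"
        unfolding cz cP by simp
      also have "\<dots> \<le> - ((1 - u) * R) * Re c - u * (R * Re c)"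
        using u R \<open>Re c \<le> norm c\<close> by (intro diff_mono) (auto intro!: mult_left_mono)
      also have "\<dots> = - R * Re c" by (simp add: algebra_simps)
      finally have e1: "norm (exp (c * z)) \<le> exp (- R * Re c)" by simp
      have "norm z \<le> norm ((1 - u) *\<^sub>R (- of_real R :: complex)) + norm (u *\<^sub>R P)"
        unfolding zu by (rule norm_triangle_ineq)
      also have "\<dots> = (1 - u) * R + u * R" using u R nP by simp
      finally have nz: "norm z \<le> R" by (simp add: algebra_simps)
      have "norm ((-z) powr (w - 1)) \<le> norm (-z) powr Re (w - 1) * exp (\<bar>Im (w - 1)\<bar> * pi)"
        by (rule norm_powr_bound)
      also have "\<dots> \<le> R powr Re (w - 1) * exp (\<bar>Im (w - 1)\<bar> * pi)"
        using nz wpos by (intro mult_right_mono powr_mono2) auto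
      finally have e2: "norm ((-z) powr (w - 1)) \<le> R powr (Re w - 1) * exp (\<bar>Im w\<bar> * pi)" by simp
      show ?thesis unfolding q_def norm_mult
        using e1 e2 by (intro mult_mono) auto
    qed
    have "norm (B R) \<le> exp (- R * Re c) * (R powr (Re w - 1) * exp (\<bar>Im w\<bar> * pi)) * norm (P - (- of_real R))"
      unfolding B_def P_def[symmetric]
      by (rule has_contour_integral_bound_linepath[OF has_contour_integral_integral[OF int] _ bnd]) auto
    also have "norm (P - (- of_real R)) \<le> 2 * R"
      using norm_triangle_ineq[of P "of_real R"] nP R by simp
    hence "exp (- R * Re c) * (R powr (Re w - 1) * exp (\<bar>Im w\<bar> * pi)) * norm (P - (- of_real R))
           \<le> exp (- R * Re c) * (R powr (Re w - 1) * exp (\<bar>Im w\<bar> * pi)) * (2 * R)"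
      by (intro mult_left_mono) auto
    finally show ?thesis .
  qed
  have Blim: "(B \<longlongrightarrow> 0) at_top"
  proof (rule Lim_null_comparison)
    show "eventually (\<lambda>R. norm (B R) \<le> exp (- R * Re c) * (R powr (Re w - 1) * exp (\<bar>Im w\<bar> * pi)) * (2 * R)) at_top"
      using eventually_gt_at_top[of 0] by eventually_elim (rule Bbound)
    have "((\<lambda>R. 2 * exp (\<bar>Im w\<bar> * pi) * (R powr (Re w) * exp (- Re c * R))) \<longlongrightarrow> 2 * exp (\<bar>Im w\<bar> * pi) * 0) at_top"
      by (intro tendsto_intros powr_exp_0 c)
    moreover have "eventually (\<lambda>R. 2 * exp (\<bar>Im w\<bar> * pi) * (R powr (Re w) * exp (- Re c * R))
        = exp (- R * Re c) * (R powr (Re w - 1) * exp (\<bar>Im w\<bar> * pi)) * (2 * R)) at_top"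
      using eventually_gt_at_top[of 0]
    proof eventually_elim
      case (elim R)
      have "R powr (Re w) = R powr (Re w - 1) * R" using elim by (simp add: powr_diff)
      thus ?case by (simp add: algebra_simps)
    qed
    ultimately show "((\<lambda>R. exp (- R * Re c) * (R powr (Re w - 1) * exp (\<bar>Im w\<bar> * pi)) * (2 * R)) \<longlongrightarrow> 0) at_top"
      by (simp add: Lim_transform_eventually)
  qed
  have Jlim: "((\<lambda>R. J (R * norm c)) \<longlongrightarrow> Gamma w) at_top"
  proof -
    have "filterlim (\<lambda>R. R * norm c) at_top at_top"
      using filterlim_tendsto_pos_mult_at_top[OF tendsto_const _ filterlim_ident, of "norm c"] c0
      by (simp add: mult.commute)
    thus ?thesis unfolding J_def gg_def
      using gamma_tendsto[of w] w by (intro filterlim_compose[OF gamma_tendsto]) auto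
  qed
  have "((\<lambda>R. B R + e * J (R * norm c)) \<longlongrightarrow> 0 + e * Gamma w) at_top"
    by (intro tendsto_intros Blim Jlim)
  hence l: "((\<lambda>R. B R + e * J (R * norm c)) \<longlongrightarrow> e * Gamma w) at_top" by simp
  have ev: "eventually (\<lambda>R. B R + e * J (R * norm c) = contour_integral (linepath (- of_real R) 0) q) at_top"
    using eventually_gt_at_top[of 0] by eventually_elim (simp add: main)
  have "((\<lambda>R. contour_integral (linepath (- of_real R) 0) q) \<longlongrightarrow> e * Gamma w) at_top"
    by (rule Lim_transform_eventually[OF l ev])
  thus ?thesis unfolding q_def e_def .
qed

lemma Ln_rot:
  assumes "z \<noteq> 0" "- pi < Im (Ln z) + \<theta>" "Im (Ln z) + \<theta> \<le> pi"
  shows "Ln (exp (\<i> * of_real \<theta>) * z) = Ln z + \<i> * of_real \<theta>"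
proof -
  have "exp (\<i> * of_real \<theta>) * z = exp (Ln z + \<i> * of_real \<theta>)" using assms(1) by (simp add: exp_add)
  moreover have "Ln (exp (Ln z + \<i> * of_real \<theta>)) = Ln z + \<i> * of_real \<theta>"
    using assms by (intro Ln_exp) auto
  ultimately show ?thesis by simp
qed

lemma Im_Ln_lower:
  assumes "Im z \<le> 0" "z \<notin> \<real>\<^sub>\<le>\<^sub>0"
  shows "Im (Ln z) \<le> 0"
proof (rule ccontr)
  assume "\<not> Im (Ln z) \<le> 0"
  have z0: "z \<noteq> 0" using assms by auto
  have "Im (Ln z) \<noteq> pi" using Im_Ln_eq_pi[OF z0] assms by (auto simp: complex_nonpos_Reals_iff)
  hence "Im (Ln z) < pi" using Im_Ln_le_pi[of z] z0 by linarith
  hence "0 < Im z" using Im_Ln_pos_lt[OF z0] \<open>\<not> Im (Ln z) \<le> 0\<close> by auto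
  thus False using assms by simp
qed

lemma Im_Ln_upper:
  assumes "Im z \<ge> 0" "z \<notin> \<real>\<^sub>\<le>\<^sub>0"
  shows "Im (Ln z) \<ge> 0" "Im (Ln z) < pi"
proof -
  have z0: "z \<noteq> 0" using assms by auto
  show "Im (Ln z) \<ge> 0" using Im_Ln_pos_le[OF z0] assms by auto
  have "Im (Ln z) \<noteq> pi" using Im_Ln_eq_pi[OF z0] assms by (auto simp: complex_nonpos_Reals_iff)
  thus "Im (Ln z) < pi" using Im_Ln_le_pi[of z] z0 by linarith
qed

lemma powr_iz_lower:
  assumes "Im z \<le> 0" "z \<notin> \<real>\<^sub>\<le>\<^sub>0"
  shows "(\<i> * z) powr a = exp (a * (Ln z + \<i> * of_real (pi/2)))"
proof -
  have z0: "z \<noteq> 0" using assms by auto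
  have e: "\<i> = exp (\<i> * of_real (pi/2))" by (simp add: exp_eq_polar cis_conv_exp[symmetric])
  have "Ln (\<i> * z) = Ln z + \<i> * of_real (pi/2)"
    using Im_Ln_lower[OF assms] mpi_less_Im_Ln[of z] z0
    by (subst e, intro Ln_rot) auto
  thus ?thesis using z0 by (simp add: powr_def)
qed

lemma powr_miz_upper:
  assumes "Im z \<ge> 0" "z \<notin> \<real>\<^sub>\<le>\<^sub>0"
  shows "(- \<i> * z) powr a = exp (a * (Ln z + \<i> * of_real (- pi/2)))"
proof -
  have z0: "z \<noteq> 0" using assms by auto
  have e: "- \<i> = exp (\<i> * of_real (- pi/2))" by (simp add: exp_eq_polar cis_conv_exp[symmetric])
  have "Ln (- \<i> * z) = Ln z + \<i> * of_real (- pi/2)"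
    using Im_Ln_upper[OF assms] z0
    by (subst e, intro Ln_rot) auto
  thus ?thesis using z0 by (simp add: powr_def)
qed

lemma seg_ReIm:
  assumes "z \<in> closed_segment a b"
  obtains u where "0 \<le> u" "u \<le> 1" "Re z = (1 - u) * Re a + u * Re b" "Im z = (1 - u) * Im a + u * Im b"
proof -
  from assms obtain u where u: "0 \<le> u" "u \<le> 1" and zu: "z = (1 - u) *\<^sub>R a + u *\<^sub>R b"
    unfolding closed_segment_def by blast
  show ?thesis by (rule that[OF u]) (simp_all add: zu)
qed

lemma vert_est:
  fixes k K c a z :: complex
  assumes "norm k = 1" "Re a > 0" "R > 0" "Re z = - R" "\<bar>Im z\<bar> \<le> 1"
  shows "norm (exp (c * z) * (k * z) powr a * K)
         \<le> exp (\<bar>Im c\<bar>) * exp (\<bar>Im a\<bar> * pi) * norm K * ((R + 1) powr Re a * exp (- Re c * R))"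
proof -
  have "Re (c * z) = - Re c * R - Im c * Im z" using assms by simp
  also have "\<dots> \<le> - Re c * R + \<bar>Im c\<bar>"
  proof -
    have "\<bar>Im c * Im z\<bar> \<le> \<bar>Im c\<bar> * 1" unfolding abs_mult using assms by (intro mult_left_mono) auto
    thus ?thesis by linarith
  qed
  finally have e1: "norm (exp (c * z)) \<le> exp (\<bar>Im c\<bar>) * exp (- Re c * R)" by (simp add: exp_add[symmetric] add.commute)
  have "norm z \<le> \<bar>Re z\<bar> + \<bar>Im z\<bar>" by (rule cmod_le)
  hence nz: "norm (k * z) \<le> R + 1" using assms by (simp add: norm_mult)
  have "norm ((k * z) powr a) \<le> norm (k * z) powr Re a * exp (\<bar>Im a\<bar> * pi)" by (rule norm_powr_bound)
  also have "\<dots> \<le> (R + 1) powr Re a * exp (\<bar>Im a\<bar> * pi)"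
    using nz assms by (intro mult_right_mono powr_mono2) auto
  finally have e2: "norm ((k * z) powr a) \<le> (R + 1) powr Re a * exp (\<bar>Im a\<bar> * pi)" .
  have "norm (exp (c * z) * (k * z) powr a * K) = norm (exp (c * z)) * norm ((k * z) powr a) * norm K"
    by (simp add: norm_mult)
  also have "\<dots> \<le> (exp (\<bar>Im c\<bar>) * exp (- Re c * R)) * ((R + 1) powr Re a * exp (\<bar>Im a\<bar> * pi)) * norm K"
    using e1 e2 by (intro mult_right_mono mult_mono) auto
  also have "\<dots> = exp (\<bar>Im c\<bar>) * exp (\<bar>Im a\<bar> * pi) * norm K * ((R + 1) powr Re a * exp (- Re c * R))"
    by (simp add: algebra_simps)
  finally show ?thesis .
qed

lemma vert_int_lim:
  fixes k K c a :: complex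
  assumes "norm k = 1" "Re c > 0" "Re a > 0" "\<bar>y1\<bar> \<le> 1" "\<bar>y2\<bar> \<le> 1" "\<bar>y2 - y1\<bar> \<le> 1"
    and cont: "\<And>R. R > 0 \<Longrightarrow> continuous_on (closed_segment (- of_real R + \<i> * of_real y1) (- of_real R + \<i> * of_real y2))
                   (\<lambda>z. exp (c * z) * (k * z) powr a * K)"
  shows "((\<lambda>R. contour_integral (linepath (- of_real R + \<i> * of_real y1) (- of_real R + \<i> * of_real y2))
              (\<lambda>z. exp (c * z) * (k * z) powr a * K)) \<longlongrightarrow> 0) at_top"
proof (rule Lim_null_comparison)
  define M where "M = exp (\<bar>Im c\<bar>) * exp (\<bar>Im a\<bar> * pi) * norm K"
  show "((\<lambda>R. M * ((R + 1) powr Re a * exp (- Re c * R))) \<longlongrightarrow> 0) at_top"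
    using tendsto_mult_left[OF powr_exp_0'[OF assms(2), of "Re a"], of M] by simp
  show "eventually (\<lambda>R. norm (contour_integral (linepath (- of_real R + \<i> * of_real y1) (- of_real R + \<i> * of_real y2))
              (\<lambda>z. exp (c * z) * (k * z) powr a * K)) \<le> M * ((R + 1) powr Re a * exp (- Re c * R))) at_top"
    using eventually_gt_at_top[of 0]
  proof eventually_elim
    case (elim R)
    have int: "(\<lambda>z. exp (c * z) * (k * z) powr a * K) contour_integrable_on
               linepath (- of_real R + \<i> * of_real y1) (- of_real R + \<i> * of_real y2)"
      by (rule contour_integrable_continuous_linepath[OF cont[OF elim]])
    have M0: "0 \<le> M * ((R + 1) powr Re a * exp (- Re c * R))" by (simp add: M_def)
    have "norm (contour_integral (linepath (- of_real R + \<i> * of_real y1) (- of_real R + \<i> * of_real y2))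
              (\<lambda>z. exp (c * z) * (k * z) powr a * K))
          \<le> M * ((R + 1) powr Re a * exp (- Re c * R)) * norm ((- of_real R + \<i> * of_real y2) - (- of_real R + \<i> * of_real y1))"
    proof (rule has_contour_integral_bound_linepath[OF has_contour_integral_integral[OF int] M0])
      fix z assume z: "z \<in> closed_segment (- of_real R + \<i> * of_real y1) (- of_real R + \<i> * of_real y2)"
      then obtain u where u: "0 \<le> u" "u \<le> 1" and re: "Re z = (1 - u) * (- R) + u * (- R)"
         and im: "Im z = (1 - u) * y1 + u * y2"
        by (rule seg_ReIm) simp
      have "Re z = - R" using re by (simp add: algebra_simps)
      moreover have "\<bar>Im z\<bar> \<le> 1"
      proof -
        have "\<bar>Im z\<bar> \<le> (1 - u) * \<bar>y1\<bar> + u * \<bar>y2\<bar>" unfolding im using u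
          by (metis abs_mult abs_of_nonneg abs_triangle_ineq diff_ge_0_iff_ge)
        also have "\<dots> \<le> (1 - u) * 1 + u * 1" using u assms by (intro add_mono mult_left_mono) auto
        finally show ?thesis by simp
      qed
      ultimately show "norm (exp (c * z) * (k * z) powr a * K) \<le> M * ((R + 1) powr Re a * exp (- Re c * R))"
        unfolding M_def using vert_est[OF assms(1,3) elim] by blast
    qed
    also have "norm ((- of_real R + \<i> * of_real y2) - (- of_real R + \<i> * of_real y1)) = \<bar>y2 - y1\<bar>"
      by (simp add: norm_mult flip: of_real_diff right_diff_distrib)
    also have "M * ((R + 1) powr Re a * exp (- Re c * R)) * \<bar>y2 - y1\<bar> \<le> M * ((R + 1) powr Re a * exp (- Re c * R)) * 1"
      using assms M0 by (intro mult_left_mono) auto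
    finally show ?case by simp
  qed
qed

lemma seg_Im_const: "z \<in> closed_segment u v \<Longrightarrow> Im u = y \<Longrightarrow> Im v = y \<Longrightarrow> Im z = y"
  by (erule seg_ReIm) (simp add: algebra_simps)

lemma seg_Re_const: "z \<in> closed_segment u v \<Longrightarrow> Re u = y \<Longrightarrow> Re v = y \<Longrightarrow> Re z = y"
  by (erule seg_ReIm) (simp add: algebra_simps)

lemma seg_Im_between: "z \<in> closed_segment u v \<Longrightarrow> Im u \<le> Im v \<Longrightarrow> Im u \<le> Im z \<and> Im z \<le> Im v"
proof (erule seg_ReIm)
  fix t :: real assume t: "0 \<le> t" "t \<le> 1" "Im z = (1 - t) * Im u + t * Im v" and uv: "Im u \<le> Im v"
  have "Im z = Im u + t * (Im v - Im u)" using t by (simp add: algebra_simps)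
  moreover have "0 \<le> t * (Im v - Im u)" using t uv by simp
  moreover have "t * (Im v - Im u) \<le> 1 * (Im v - Im u)" using t uv by (intro mult_right_mono) auto
  ultimately show ?thesis by simp
qed

lemma ofreal_ii_powr:
  assumes "r > 0"
  shows "(of_real r * \<i>) powr a = exp (a * of_real (ln r)) * exp (a * (\<i> * of_real (pi/2)))"
    and "(of_real r * (- \<i>)) powr a = exp (a * of_real (ln r)) * exp (a * (- (\<i> * of_real (pi/2))))"
    and "(of_real r :: complex) powr a = exp (a * of_real (ln r))"
    apply (simp only: powr_ofreal_mult[OF assms], simp add: powr_def)
   apply (simp only: powr_ofreal_mult[OF assms], simp add: powr_def)
  using assms by (simp add: powr_def Ln_of_real)

lemma lin_combo:
  fixes l1 l2 l3 l4 l5 u1 u2 u3 u4 u5 h K Q :: complex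
  assumes "l1 + l2 + l3 + l4 + l5 = 0" "u1 + u2 + u3 + u4 + u5 = 0" "u4 = - l3" "l4 = K * (- Q)" "u3 = Q"
    "h = l1 + ((l2 + u5) + u1)"
  shows "h = (K - 1) * Q - l5 - u2"
  using assms by algebra

lemma cauchy_halfplane':
  fixes f :: "complex \<Rightarrow> complex"
  assumes "S = {z. a \<bullet> z \<le> b}" "a \<noteq> 0" "continuous_on S f"
    "\<And>z. a \<bullet> z < b \<Longrightarrow> f field_differentiable at z"
    "valid_path g" "path_image g \<subseteq> S" "pathfinish g = pathstart g"
  shows "(f has_contour_integral 0) g"
  using cauchy_halfplane[of a b f g] assms by blast

lemma hankel_base:
  fixes c w :: complex
  assumes c: "Re c > 0" and w: "Re w > 1"
  shows "((\<lambda>R. contour_integral (hankel_path R) (\<lambda>z. exp (c * z) * hankel_pow (- w) z))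
           \<longlongrightarrow> (exp (- (w - 1) * (\<i> * of_real (2 * pi))) - 1) * (exp (- w * Ln c) * Gamma w)) at_top"
proof -
  define a where "a = w - 1"
  have a: "Re a > 0" using w by (simp add: a_def)
  define g where "g = (\<lambda>z. exp (c * z) * hankel_pow (- w) z)"
  define K1 where "K1 = exp (- a * (\<i> * of_real (3 * pi / 2)))"
  define K2 where "K2 = exp (- a * (\<i> * of_real (pi / 2)))"
  define K where "K = exp (- a * (\<i> * of_real (2 * pi)))"
  define qm where "qm = (\<lambda>z. exp (c * z) * (\<i> * z) powr a * K1)"
  define qp where "qp = (\<lambda>z. exp (c * z) * (- \<i> * z) powr a * K2)"
  define q where "q = (\<lambda>z. exp (c * z) * (- z) powr a)"
  have hp: "hankel_pow (- w) z = exp (a * (Ln z - \<i> * of_real pi))" for z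
    by (simp add: hankel_pow_def a_def)
  have gm: "g z = qm z" if "Im z \<le> 0" "z \<notin> \<real>\<^sub>\<le>\<^sub>0" for z
  proof -
    have "a * (Ln z + \<i> * of_real (pi/2)) + (- a * (\<i> * of_real (3 * pi / 2))) = a * (Ln z - \<i> * of_real pi)"
      by (simp add: algebra_simps)
    thus ?thesis unfolding g_def qm_def K1_def hp powr_iz_lower[OF that]
      by (simp add: exp_add[symmetric] mult.assoc add_diff_eq[symmetric])
  qed
  have gp: "g z = qp z" if "Im z \<ge> 0" "z \<notin> \<real>\<^sub>\<le>\<^sub>0" for z
  proof -
    have "a * (Ln z + \<i> * of_real (- pi/2)) + (- a * (\<i> * of_real (pi / 2))) = a * (Ln z - \<i> * of_real pi)"
      by (simp add: algebra_simps)
    thus ?thesis unfolding g_def qp_def K2_def hp powr_miz_upper[OF that]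
      by (simp add: exp_add[symmetric] mult.assoc add_diff_eq[symmetric])
  qed
  have negm: "qm (- of_real r) = K * q (- of_real r)" if "r \<ge> 0" for r
  proof (cases "r = 0")
    case False
    hence r: "r > 0" using that by simp
    have e1: "\<i> * - of_real r = of_real r * (- \<i>)" by simp
    have "a * (- (\<i> * of_real (pi/2))) + (- a * (\<i> * of_real (3 * pi / 2))) = - a * (\<i> * of_real (2 * pi))"
      by (simp add: algebra_simps)
    hence "exp (a * (- (\<i> * of_real (pi/2)))) * K1 = K" unfolding K1_def K_def by (simp add: exp_add[symmetric] mult_ac)
    thus ?thesis unfolding qm_def q_def e1 ofreal_ii_powr[OF r] by (simp add: ofreal_ii_powr(3)[OF r] algebra_simps)
  qed (simp add: qm_def q_def)
  have negp: "qp (- of_real r) = q (- of_real r)" if "r \<ge> 0" for r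
  proof (cases "r = 0")
    case False
    hence r: "r > 0" using that by simp
    have e1: "- \<i> * - of_real r = of_real r * \<i>" by simp
    have "exp (a * (\<i> * of_real (pi/2))) * K2 = 1" unfolding K2_def by (simp add: exp_add[symmetric])
    thus ?thesis unfolding qp_def q_def e1 ofreal_ii_powr[OF r] by (simp add: ofreal_ii_powr(3)[OF r] algebra_simps)
  qed (simp add: qp_def q_def)
  have posr: "qm (of_real r) = qp (of_real r)" if "r \<ge> 0" for r
  proof (cases "r = 0")
    case False
    hence r: "r > 0" using that by simp
    have e1: "\<i> * of_real r = of_real r * \<i>" "- \<i> * of_real r = of_real r * (- \<i>)" by simp_all
    have "a * (\<i> * of_real (pi/2)) + (- a * (\<i> * of_real (3 * pi / 2))) = a * (- (\<i> * of_real (pi/2))) + (- a * (\<i> * of_real (pi / 2)))"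
      by (simp add: algebra_simps)
    hence "exp (a * (\<i> * of_real (pi/2))) * K1 = exp (a * (- (\<i> * of_real (pi/2)))) * K2"
      unfolding K1_def K2_def by (simp add: exp_add[symmetric])
    thus ?thesis unfolding qm_def qp_def e1 ofreal_ii_powr[OF r] by (simp add: algebra_simps)
  qed (simp add: qm_def qp_def)
  define Sm where "Sm = {z::complex. \<i> \<bullet> z \<le> 0}"
  define Sp where "Sp = {z::complex. (- \<i>) \<bullet> z \<le> 0}"
  have Sm_eq: "Sm = {z. Im z \<le> 0}" by (simp add: Sm_def)
  have Sp_eq: "Sp = {z. Im z \<ge> 0}" by (simp add: Sp_def inner_minus_left)
  have pm: "continuous_on Sm (\<lambda>z. (\<i> * z) powr a)"
    using a by (rule cont_powr_lin) (auto simp: Sm_eq complex_nonpos_Reals_iff complex_eq_iff)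
  have contm: "continuous_on Sm qm"
    unfolding qm_def using pm by (intro continuous_on_mult) (auto intro!: continuous_intros)
  have pp: "continuous_on Sp (\<lambda>z. (- \<i> * z) powr a)"
    using a by (rule cont_powr_lin) (auto simp: Sp_eq complex_nonpos_Reals_iff complex_eq_iff)
  have contp: "continuous_on Sp qp"
    unfolding qp_def using pp by (intro continuous_on_mult) (auto intro!: continuous_intros)
  have pq: "continuous_on {z. Re z \<le> 0} (\<lambda>z. (- 1 * z) powr a)"
    using a by (rule cont_powr_lin) (auto simp: complex_nonpos_Reals_iff complex_eq_iff)
  have contq: "continuous_on {z. Re z \<le> 0} q"
    unfolding q_def using pq by (intro continuous_on_mult) (auto intro!: continuous_intros)
  have diffm: "qm field_differentiable at z" if "\<i> \<bullet> z < 0" for z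
  proof -
    have "qm holomorphic_on {z. Im z < 0}" unfolding qm_def
      by (intro holomorphic_intros) (auto simp: complex_nonpos_Reals_iff)
    thus ?thesis using that open_halfspace_Im_lt by (auto intro: holomorphic_on_imp_differentiable_at)
  qed
  have diffp: "qp field_differentiable at z" if "(- \<i>) \<bullet> z < 0" for z
  proof -
    have "qp holomorphic_on {z. Im z > 0}" unfolding qp_def
      by (intro holomorphic_intros) (auto simp: complex_nonpos_Reals_iff)
    thus ?thesis using that open_halfspace_Im_gt by (auto simp: inner_minus_left intro: holomorphic_on_imp_differentiable_at)
  qed
  have segm: "closed_segment u v \<subseteq> Sm" if "Im u \<le> 0" "Im v \<le> 0" for u v
    using that by (intro closed_segment_subset) (auto simp: Sm_eq convex_halfspace_Im_le)
  have segp: "closed_segment u v \<subseteq> Sp" if "Im u \<ge> 0" "Im v \<ge> 0" for u v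
    using that by (intro closed_segment_subset) (auto simp: Sp_eq convex_halfspace_Im_ge)
  have cm: "continuous_on (closed_segment u v) qm" if "Im u \<le> 0" "Im v \<le> 0" for u v
    using continuous_on_subset[OF contm segm[OF that]] .
  have cp: "continuous_on (closed_segment u v) qp" if "Im u \<ge> 0" "Im v \<ge> 0" for u v
    using continuous_on_subset[OF contp segp[OF that]] .
  define Q where "Q = (\<lambda>R::real. contour_integral (linepath (- of_real R) 0) q)"
  define V1 where "V1 = (\<lambda>R::real. contour_integral (linepath (- of_real R + \<i> * of_real 0) (- of_real R + \<i> * of_real (-1))) qm)"
  define V2 where "V2 = (\<lambda>R::real. contour_integral (linepath (- of_real R + \<i> * of_real 1) (- of_real R + \<i> * of_real 0)) qp)"
  have decomp: "contour_integral (hankel_path R) g = (K - 1) * Q R - V1 R - V2 R" if R: "R > 0" for R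
  proof -
    define A where "A = - of_real R - \<i>"
    define B where "B = 1 - (\<i>::complex)"
    define E where "E = - (of_real R :: complex)"
    define A' where "A' = 1 + (\<i>::complex)"
    define B' where "B' = - of_real R + (\<i>::complex)"
    have pim1: "path_image (linepath A B +++ linepath B 1 +++ linepath 1 0 +++ linepath 0 E +++ linepath E A) \<subseteq> Sm"
      using segm[of A B] segm[of B 1] segm[of 1 0] segm[of 0 E] segm[of E A]
      by (simp add: path_image_join A_def B_def E_def)
    have lower: "(qm has_contour_integral 0) (linepath A B +++ linepath B 1 +++ linepath 1 0 +++ linepath 0 E +++ linepath E A)"
      by (rule cauchy_halfplane'[OF Sm_def _ contm diffm _ pim1]) auto
    hence L: "contour_integral (linepath A B) qm + contour_integral (linepath B 1) qm + contour_integral (linepath 1 0) qm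
        + contour_integral (linepath 0 E) qm + contour_integral (linepath E A) qm = 0"
      by (rule poly5) (auto intro!: cm simp: A_def B_def E_def)
    have pim2: "path_image (linepath A' B' +++ linepath B' E +++ linepath E 0 +++ linepath 0 1 +++ linepath 1 A') \<subseteq> Sp"
      using segp[of A' B'] segp[of B' E] segp[of E 0] segp[of 0 1] segp[of 1 A']
      by (simp add: path_image_join A'_def B'_def E_def)
    have upper: "(qp has_contour_integral 0) (linepath A' B' +++ linepath B' E +++ linepath E 0 +++ linepath 0 1 +++ linepath 1 A')"
      by (rule cauchy_halfplane'[OF Sp_def _ contp diffp _ pim2]) auto
    hence U: "contour_integral (linepath A' B') qp + contour_integral (linepath B' E) qp + contour_integral (linepath E 0) qp
        + contour_integral (linepath 0 1) qp + contour_integral (linepath 1 A') qp = 0"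
      by (rule poly5) (auto intro!: cp simp: A'_def B'_def E_def)
    have notneg: "z \<notin> \<real>\<^sub>\<le>\<^sub>0" if "Im z \<noteq> 0 \<or> Re z > 0" for z
      using that by (auto simp: complex_nonpos_Reals_iff)
    have I1: "(g has_contour_integral contour_integral (linepath A B) qm) (linepath A B)"
    proof (rule has_contour_integral_eq)
      show "(qm has_contour_integral contour_integral (linepath A B) qm) (linepath A B)"
        by (intro has_contour_integral_integral contour_integrable_continuous_linepath cm) (auto simp: A_def B_def)
      fix z assume "z \<in> path_image (linepath A B)"
      hence "Im z = -1" by (intro seg_Im_const[of z A B]) (auto simp: A_def B_def)
      thus "qm z = g z" using gm[of z] notneg[of z] by simp
    qed
    have I2: "(g has_contour_integral contour_integral (linepath B 1) qm) (linepath B 1)"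
    proof (rule has_contour_integral_eq)
      show "(qm has_contour_integral contour_integral (linepath B 1) qm) (linepath B 1)"
        by (intro has_contour_integral_integral contour_integrable_continuous_linepath cm) (auto simp: B_def)
      fix z assume z: "z \<in> path_image (linepath B 1)"
      hence "Re z = 1" by (intro seg_Re_const[of z B 1]) (auto simp: B_def)
      moreover have "Im z \<le> 0" using seg_Im_between[of z B 1] z by (auto simp: B_def)
      ultimately show "qm z = g z" using gm[of z] notneg[of z] by simp
    qed
    have I3: "(g has_contour_integral contour_integral (linepath 1 A') qp) (linepath 1 A')"
    proof (rule has_contour_integral_eq)
      show "(qp has_contour_integral contour_integral (linepath 1 A') qp) (linepath 1 A')"
        by (intro has_contour_integral_integral contour_integrable_continuous_linepath cp) (auto simp: A'_def)
      fix z assume z: "z \<in> path_image (linepath 1 A')"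
      hence "Re z = 1" by (intro seg_Re_const[of z 1 A']) (auto simp: A'_def)
      moreover have "Im z \<ge> 0" using seg_Im_between[of z 1 A'] z by (auto simp: A'_def)
      ultimately show "qp z = g z" using gp[of z] notneg[of z] by simp
    qed
    have I4: "(g has_contour_integral contour_integral (linepath A' B') qp) (linepath A' B')"
    proof (rule has_contour_integral_eq)
      show "(qp has_contour_integral contour_integral (linepath A' B') qp) (linepath A' B')"
        by (intro has_contour_integral_integral contour_integrable_continuous_linepath cp) (auto simp: A'_def B'_def)
      fix z assume "z \<in> path_image (linepath A' B')"
      hence "Im z = 1" by (intro seg_Im_const[of z A' B']) (auto simp: A'_def B'_def)
      thus "qp z = g z" using gp[of z] notneg[of z] by simp
    qed
    have I23: "(g has_contour_integral (contour_integral (linepath B 1) qm + contour_integral (linepath 1 A') qp)) (linepath B A')"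
      by (rule has_contour_integral_split[OF I2 I3, of "1/2"]) (auto simp: B_def A'_def scaleR_conv_of_real)
    have hp_eq: "hankel_path R = linepath A B +++ (linepath B A' +++ linepath A' B')"
      by (simp add: hankel_path_def A_def B_def A'_def B'_def)
    have "(g has_contour_integral (contour_integral (linepath A B) qm + ((contour_integral (linepath B 1) qm + contour_integral (linepath 1 A') qp)
            + contour_integral (linepath A' B') qp))) (hankel_path R)"
      unfolding hp_eq by (intro has_contour_integral_join I1 I23 I4 valid_path_join) auto
    hence H: "contour_integral (hankel_path R) g = contour_integral (linepath A B) qm + ((contour_integral (linepath B 1) qm + contour_integral (linepath 1 A') qp)
            + contour_integral (linepath A' B') qp)"
      by (rule contour_integral_unique)
    have r01: "contour_integral (linepath 0 1) qp = contour_integral (linepath 0 1) qm"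
    proof (rule contour_integral_eq)
      fix z :: complex assume z: "z \<in> path_image (linepath 0 1)"
      hence "Im z = 0" by (intro seg_Im_const[of z 0 1]) auto
      moreover have "Re z \<ge> 0" using z by (auto elim!: seg_ReIm)
      ultimately have "z = of_real (Re z)" by (simp add: complex_eq_iff)
      thus "qp z = qm z" using posr[of "Re z"] \<open>Re z \<ge> 0\<close> by metis
    qed
    have r10: "contour_integral (linepath 1 0) qm = - contour_integral (linepath 0 1) qm"
      by (rule contour_integral_reverse_linepath) (auto intro!: cm)
    have cqE: "continuous_on (closed_segment 0 E) q"
      by (rule continuous_on_subset[OF contq]) (intro closed_segment_subset, use R in \<open>auto simp: E_def convex_halfspace_Re_le\<close>)
    have L4: "contour_integral (linepath 0 E) qm = K * contour_integral (linepath 0 E) q"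
    proof -
      have "contour_integral (linepath 0 E) qm = contour_integral (linepath 0 E) (\<lambda>z. K * q z)"
      proof (rule contour_integral_eq)
        fix z assume z: "z \<in> path_image (linepath 0 E)"
        hence "Im z = 0" by (intro seg_Im_const[of z 0 E]) (auto simp: E_def)
        moreover have "Re z \<le> 0" using z R by (auto simp: E_def elim!: seg_ReIm)
        ultimately have "z = - of_real (- Re z)" by (simp add: complex_eq_iff)
        thus "qm z = K * q z" using negm[of "- Re z"] \<open>Re z \<le> 0\<close> by (metis neg_0_le_iff_le)
      qed
      also have "\<dots> = K * contour_integral (linepath 0 E) q"
        by (rule contour_integral_lmul) (rule contour_integrable_continuous_linepath[OF cqE])
      finally show ?thesis .
    qed
    have r0E: "contour_integral (linepath 0 E) q = - Q R"
      unfolding Q_def E_def[symmetric] by (rule contour_integral_reverse_linepath[OF cqE])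
    have U3: "contour_integral (linepath E 0) qp = Q R"
      unfolding Q_def E_def[symmetric]
    proof (rule contour_integral_eq)
      fix z assume z: "z \<in> path_image (linepath E 0)"
      hence "Im z = 0" by (intro seg_Im_const[of z E 0]) (auto simp: E_def)
      moreover have "Re z \<le> 0" using z R by (auto simp: E_def elim!: seg_ReIm)
      ultimately have "z = - of_real (- Re z)" by (simp add: complex_eq_iff)
      thus "qp z = q z" using negp[of "- Re z"] \<open>Re z \<le> 0\<close> by (metis neg_0_le_iff_le)
    qed
    have V1e: "V1 R = contour_integral (linepath E A) qm" by (simp add: V1_def E_def A_def)
    have V2e: "V2 R = contour_integral (linepath B' E) qp" by (simp add: V2_def E_def B'_def)
    show ?thesis
      unfolding V1e V2e
      by (rule lin_combo[OF L U _ _ U3 H]) (simp_all add: r01 r10 L4 r0E)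
  qed
  have Qlim: "(Q \<longlongrightarrow> exp (- w * Ln c) * Gamma w) at_top"
    unfolding Q_def q_def a_def by (rule gamma_c_tendsto[OF c w])
  have V1lim: "(V1 \<longlongrightarrow> 0) at_top"
    unfolding V1_def qm_def
    by (rule vert_int_lim[OF _ c a]) (auto intro!: cm[unfolded qm_def])
  have V2lim: "(V2 \<longlongrightarrow> 0) at_top"
    unfolding V2_def qp_def
  proof (rule vert_int_lim[OF _ c a])
    fix R :: real assume "R > 0"
    show "continuous_on (closed_segment (- of_real R + \<i> * of_real 1) (- of_real R + \<i> * of_real 0)) (\<lambda>z. exp (c * z) * (- \<i> * z) powr a * K2)"
      using cp[of "- of_real R + \<i> * of_real 1" "- of_real R + \<i> * of_real 0"] by (simp add: qp_def)
  qed auto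
  have "((\<lambda>R. (K - 1) * Q R - V1 R - V2 R) \<longlongrightarrow> (K - 1) * (exp (- w * Ln c) * Gamma w) - 0 - 0) at_top"
    by (intro tendsto_intros Qlim V1lim V2lim)
  hence l: "((\<lambda>R. (K - 1) * Q R - V1 R - V2 R) \<longlongrightarrow> (K - 1) * (exp (- w * Ln c) * Gamma w)) at_top" by simp
  have ev: "eventually (\<lambda>R. (K - 1) * Q R - V1 R - V2 R = contour_integral (hankel_path R) g) at_top"
    using eventually_gt_at_top[of 0] by eventually_elim (simp add: decomp)
  show ?thesis using Lim_transform_eventually[OF l ev] unfolding g_def K_def a_def .
qed

definition Fh :: "complex \<Rightarrow> complex \<Rightarrow> complex \<Rightarrow> complex" where
  "Fh c x z = exp (c * z) * hankel_pow x z"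
definition Jh :: "complex \<Rightarrow> complex \<Rightarrow> real \<Rightarrow> complex" where
  "Jh c x R = contour_integral (hankel_path R) (Fh c x)"
definition Lh :: "complex \<Rightarrow> complex \<Rightarrow> complex" where
  "Lh c x = (exp (\<i> * of_real (2 * pi) * (x + 1)) - 1) * exp (x * Ln c) * Gamma (- x)"

lemma hankel_path_props:
  shows "valid_path (hankel_path R)" "pathstart (hankel_path R) = - of_real R - \<i>"
        "pathfinish (hankel_path R) = - of_real R + \<i>"
        "path_image (hankel_path R) \<subseteq> - \<real>\<^sub>\<le>\<^sub>0"
proof -
  show "valid_path (hankel_path R)" by (simp add: hankel_path_def)
  show "pathstart (hankel_path R) = - of_real R - \<i>" by (simp add: hankel_path_def)
  show "pathfinish (hankel_path R) = - of_real R + \<i>" by (simp add: hankel_path_def)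
  have s1: "closed_segment (- of_real R - \<i>) (1 - \<i>) \<subseteq> - \<real>\<^sub>\<le>\<^sub>0"
  proof
    fix z assume "z \<in> closed_segment (- of_real R - \<i>) (1 - \<i>)"
    hence "Im z = -1" by (rule seg_Im_const) auto
    thus "z \<in> - \<real>\<^sub>\<le>\<^sub>0" by (auto simp: complex_nonpos_Reals_iff)
  qed
  have s2: "closed_segment (1 - \<i>) (1 + \<i>) \<subseteq> - \<real>\<^sub>\<le>\<^sub>0"
  proof
    fix z assume "z \<in> closed_segment (1 - \<i>) (1 + \<i>)"
    hence "Re z = 1" by (rule seg_Re_const) auto
    thus "z \<in> - \<real>\<^sub>\<le>\<^sub>0" by (auto simp: complex_nonpos_Reals_iff)
  qed
  have s3: "closed_segment (1 + \<i>) (- of_real R + \<i>) \<subseteq> - \<real>\<^sub>\<le>\<^sub>0"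
  proof
    fix z assume "z \<in> closed_segment (1 + \<i>) (- of_real R + \<i>)"
    hence "Im z = 1" by (rule seg_Im_const) auto
    thus "z \<in> - \<real>\<^sub>\<le>\<^sub>0" by (auto simp: complex_nonpos_Reals_iff)
  qed
  show "path_image (hankel_path R) \<subseteq> - \<real>\<^sub>\<le>\<^sub>0"
    using s1 s2 s3 by (simp add: hankel_path_def path_image_join)
qed

lemma open_slit: "open (- \<real>\<^sub>\<le>\<^sub>0 :: complex set)"
  by (simp add: open_Compl)

lemma holo_Fh: "Fh c x holomorphic_on - \<real>\<^sub>\<le>\<^sub>0"
  unfolding Fh_def hankel_pow_def by (intro holomorphic_intros) auto

lemma int_Fh: "Fh c x contour_integrable_on hankel_path R"
  by (rule contour_integrable_holomorphic_simple[OF holo_Fh open_slit])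
     (use hankel_path_props in auto)

lemma deriv_Fh:
  assumes z: "z \<notin> \<real>\<^sub>\<le>\<^sub>0"
  shows "(Fh c (x - 1) has_field_derivative (c * Fh c (x - 1) z + x * Fh c x z)) (at z)"
proof -
  have z0: "z \<noteq> 0" using z by auto
  define L where "L = Ln z - \<i> * of_real pi"
  have hp1: "hankel_pow (x - 1) = (\<lambda>z. exp (- x * (Ln z - \<i> * of_real pi)))"
    by (simp add: hankel_pow_def fun_eq_iff)
  have key: "exp ((- x - 1) * L) = - exp (- x * L) / z"
  proof -
    have "(- x - 1) * L = - x * L + (- Ln z) + \<i> * of_real pi" by (simp add: L_def algebra_simps)
    hence "exp ((- x - 1) * L) = exp (- x * L) * exp (- Ln z) * exp (\<i> * of_real pi)"
      by (simp only: exp_add)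
    also have "exp (\<i> * of_real pi) = -1" by (simp add: exp_eq_polar)
    also have "exp (- Ln z) = inverse z" using z0 by (simp add: exp_minus)
    finally show ?thesis by (simp add: field_simps)
  qed
  have d: "((\<lambda>z. exp (c * z) * exp (- x * (Ln z - \<i> * of_real pi))) has_field_derivative
          (exp (c * z) * c * exp (- x * L) + exp (c * z) * (exp (- x * L) * (- x * (inverse z))))) (at z)"
    unfolding L_def using z by (auto intro!: derivative_eq_intros)
  have e: "exp (c * z) * c * exp (- x * L) + exp (c * z) * (exp (- x * L) * (- x * (inverse z)))
        = c * Fh c (x - 1) z + x * Fh c x z"
    unfolding Fh_def hp1 hankel_pow_def L_def[symmetric] key using z0 by (simp add: field_simps)
  show ?thesis using d unfolding e unfolding Fh_def hp1 .
qed

lemma Jh_rec: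
  "c * Jh c (x - 1) R + x * Jh c x R = Fh c (x - 1) (- of_real R + \<i>) - Fh c (x - 1) (- of_real R - \<i>)"
proof -
  have "((\<lambda>z. c * Fh c (x - 1) z + x * Fh c x z) has_contour_integral
          (Fh c (x - 1) (pathfinish (hankel_path R)) - Fh c (x - 1) (pathstart (hankel_path R)))) (hankel_path R)"
    by (rule contour_integral_primitive[where S = "- \<real>\<^sub>\<le>\<^sub>0"])
       (use hankel_path_props deriv_Fh in \<open>auto intro: has_field_derivative_at_within\<close>)
  hence "contour_integral (hankel_path R) (\<lambda>z. c * Fh c (x - 1) z + x * Fh c x z)
          = Fh c (x - 1) (- of_real R + \<i>) - Fh c (x - 1) (- of_real R - \<i>)"
    using hankel_path_props by (simp add: contour_integral_unique)
  moreover have "contour_integral (hankel_path R) (\<lambda>z. c * Fh c (x - 1) z + x * Fh c x z)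
      = c * Jh c (x - 1) R + x * Jh c x R"
    unfolding Jh_def using int_Fh
    by (simp add: contour_integral_add contour_integral_lmul contour_integrable_lmul)
  ultimately show ?thesis by simp
qed

lemma endpt_lim:
  assumes c: "Re c > 0" and y: "\<bar>y\<bar> = 1"
  shows "((\<lambda>R. Fh c x (- of_real R + \<i> * of_real y)) \<longlongrightarrow> 0) at_top"
proof (rule Lim_null_comparison)
  define a where "a = - x - 1"
  define K where "K = exp (- a * (\<i> * of_real pi))"
  define M where "M = exp (\<bar>Im c\<bar>) * exp (\<bar>Im a\<bar> * pi) * norm K"
  show "((\<lambda>R. M * ((R + 1) powr \<bar>Re a\<bar> * exp (- Re c * R))) \<longlongrightarrow> 0) at_top"
    using tendsto_mult_left[OF powr_exp_0'[OF c, of "\<bar>Re a\<bar>"], of M] by simp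
  show "eventually (\<lambda>R. norm (Fh c x (- of_real R + \<i> * of_real y)) \<le> M * ((R + 1) powr \<bar>Re a\<bar> * exp (- Re c * R))) at_top"
    using eventually_gt_at_top[of 0]
  proof eventually_elim
    case (elim R)
    define z where "z = - of_real R + \<i> * of_real y"
    have z0: "z \<noteq> 0" using y by (auto simp: z_def complex_eq_iff)
    have hp: "hankel_pow x z = z powr a * K"
      using z0 by (simp add: hankel_pow_def powr_def K_def a_def exp_add[symmetric] algebra_simps)
    have "Re (c * z) = - Re c * R - Im c * y" by (simp add: z_def)
    also have "\<dots> \<le> - Re c * R + \<bar>Im c\<bar>"
    proof -
      have "\<bar>Im c * y\<bar> = \<bar>Im c\<bar>" using y by (simp add: abs_mult)
      thus ?thesis by linarith
    qed
    finally have e1: "norm (exp (c * z)) \<le> exp (\<bar>Im c\<bar>) * exp (- Re c * R)"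
      by (simp add: exp_add[symmetric] add.commute)
    have nz1: "norm z \<ge> 1"
    proof -
      have "\<bar>Im z\<bar> \<le> norm z" by (rule abs_Im_le_cmod)
      thus ?thesis using y by (simp add: z_def)
    qed
    have nz2: "norm z \<le> R + 1"
    proof -
      have "norm z \<le> \<bar>Re z\<bar> + \<bar>Im z\<bar>" by (rule cmod_le)
      thus ?thesis using y elim by (simp add: z_def)
    qed
    have pz: "norm z powr Re a \<le> (R + 1) powr \<bar>Re a\<bar>"
    proof (cases "Re a \<ge> 0")
      case True
      thus ?thesis using nz1 nz2 by (simp add: powr_mono2)
    next
      case False
      have "norm z powr Re a = exp (Re a * ln (norm z))" using nz1 z0 by (simp add: powr_def)
      also have "\<dots> \<le> 1" using False nz1 by (simp add: mult_nonpos_nonneg)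
      also have "1 \<le> (R + 1) powr \<bar>Re a\<bar>" using elim by (intro ge_one_powr_ge_zero) auto
      finally show ?thesis .
    qed
    have "norm (z powr a) \<le> norm z powr Re a * exp (\<bar>Im a\<bar> * pi)" by (rule norm_powr_bound)
    also have "\<dots> \<le> (R + 1) powr \<bar>Re a\<bar> * exp (\<bar>Im a\<bar> * pi)"
      using pz by (intro mult_right_mono) auto
    finally have e2: "norm (z powr a) \<le> (R + 1) powr \<bar>Re a\<bar> * exp (\<bar>Im a\<bar> * pi)" .
    have "norm (Fh c x z) = norm (exp (c * z)) * norm (z powr a) * norm K"
      by (simp add: Fh_def hp norm_mult)
    also have "\<dots> \<le> (exp (\<bar>Im c\<bar>) * exp (- Re c * R)) * ((R + 1) powr \<bar>Re a\<bar> * exp (\<bar>Im a\<bar> * pi)) * norm K"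
      using e1 e2 by (intro mult_right_mono mult_mono) auto
    also have "\<dots> = M * ((R + 1) powr \<bar>Re a\<bar> * exp (- Re c * R))"
      by (simp add: M_def algebra_simps)
    finally show ?case by (simp add: z_def)
  qed
qed

lemma Jh_step:
  assumes c: "Re c > 0" and x: "x \<noteq> 0" and l: "(Jh c (x - 1) \<longlongrightarrow> l) at_top"
  shows "(Jh c x \<longlongrightarrow> - c * l / x) at_top"
proof -
  have b1: "((\<lambda>R. Fh c (x - 1) (- of_real R + \<i> * of_real 1)) \<longlongrightarrow> 0) at_top" by (rule endpt_lim[OF c]) simp
  have b2: "((\<lambda>R. Fh c (x - 1) (- of_real R + \<i> * of_real (-1))) \<longlongrightarrow> 0) at_top" by (rule endpt_lim[OF c]) simp
  have "((\<lambda>R. ((Fh c (x - 1) (- of_real R + \<i> * of_real 1) - Fh c (x - 1) (- of_real R + \<i> * of_real (-1))) - c * Jh c (x - 1) R) / x)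
         \<longlongrightarrow> ((0 - 0) - c * l) / x) at_top"
    by (intro tendsto_intros b1 b2 l x)
  moreover have "((Fh c (x - 1) (- of_real R + \<i> * of_real 1) - Fh c (x - 1) (- of_real R + \<i> * of_real (-1))) - c * Jh c (x - 1) R) / x
      = Jh c x R" for R
  proof -
    have pts: "- of_real R + \<i> * of_real 1 = - of_real R + \<i>" "- of_real R + \<i> * of_real (-1) = - of_real R - \<i>"
      by simp_all
    show ?thesis unfolding pts using Jh_rec[of c x R] x by (simp add: field_simps)
  qed
  ultimately show ?thesis by simp
qed

lemma Lh_rec:
  assumes c: "Re c > 0" and x: "x \<notin> \<int>"
  shows "- c * Lh c (x - 1) / x = Lh c x"
proof -
  have x0: "x \<noteq> 0" using x by auto
  have c0: "c \<noteq> 0" using c by auto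
  have "- x \<notin> \<int>" using x by (metis Ints_minus minus_minus)
  hence nx: "- x \<notin> \<int>\<^sub>\<le>\<^sub>0" using nonpos_Ints_Int by blast
  have g: "Gamma (- (x - 1)) = - x * Gamma (- x)"
    using Gamma_plus1[OF nx] by (simp add: algebra_simps)
  have e1: "exp (\<i> * of_real (2 * pi) * (x - 1 + 1)) = exp (\<i> * of_real (2 * pi) * (x + 1))"
  proof -
    have "\<i> * of_real (2 * pi) * (x + 1) = \<i> * of_real (2 * pi) * (x - 1 + 1) + \<i> * (of_int 1 * (of_real pi * 2))"
      by (simp add: algebra_simps)
    thus ?thesis by (simp only: exp_plus_2pin)
  qed
  have e2: "exp ((x - 1) * Ln c) = exp (x * Ln c) / c"
    using c0 by (simp add: algebra_simps exp_diff)
  show ?thesis unfolding Lh_def e1 e2 g using x0 c0 by (simp add: field_simps)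
qed

lemma Jh_base:
  assumes c: "Re c > 0" and x: "Re x < -1"
  shows "(Jh c x \<longlongrightarrow> Lh c x) at_top"
proof -
  have w: "Re (- x) > 1" using x by simp
  have "(exp (- (- x - 1) * (\<i> * of_real (2 * pi))) - 1) * (exp (- (- x) * Ln c) * Gamma (- x)) = Lh c x"
    by (simp add: Lh_def algebra_simps)
  moreover have "Jh c x = (\<lambda>R. contour_integral (hankel_path R) (\<lambda>z. exp (c * z) * hankel_pow (- (- x)) z))"
    by (simp add: fun_eq_iff Jh_def Fh_def[abs_def])
  ultimately show ?thesis using hankel_base[OF c w] by simp
qed

lemma Jh_lim_aux:
  assumes c: "Re c > 0"
  shows "\<forall>x. x \<notin> \<int> \<longrightarrow> Re x < real n - 1 \<longrightarrow> (Jh c x \<longlongrightarrow> Lh c x) at_top"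
proof (induction n)
  case 0
  show ?case using Jh_base[OF c] by simp
next
  case (Suc n)
  show ?case
  proof (intro allI impI)
    fix x assume x: "x \<notin> \<int>" and re: "Re x < real (Suc n) - 1"
    show "(Jh c x \<longlongrightarrow> Lh c x) at_top"
    proof (cases "Re x < real n - 1")
      case True thus ?thesis using Suc.IH x by blast
    next
      case False
      have x1: "x - 1 \<notin> \<int>" using x by (metis Ints_1 Ints_add diff_add_cancel)
      have "Re (x - 1) < real n - 1" using re by simp
      hence l: "(Jh c (x - 1) \<longlongrightarrow> Lh c (x - 1)) at_top" using Suc.IH x1 by blast
      have x0: "x \<noteq> 0" using x by auto
      show ?thesis using Jh_step[OF c x0 l] Lh_rec[OF c x] by simp
    qed
  qed
qed

lemma Jh_lim:
  assumes c: "Re c > 0" and x: "x \<notin> \<int>"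
  shows "(Jh c x \<longlongrightarrow> Lh c x) at_top"
proof -
  obtain n :: nat where "Re x + 1 < real n" using reals_Archimedean2 by blast
  thus ?thesis using Jh_lim_aux[OF c, of n] x by auto
qed

lemma part_i:
  assumes x: "x \<notin> \<int>" and t: "norm t < 1/2"
  shows "((\<lambda>R. exp (- \<i> * of_real pi * x) / (2 * \<i> * sin (of_real pi * x) * Gamma (- x))
                   * contour_integral (hankel_path R) (hankel_integrand x t))
              \<longlongrightarrow> gen_f x t) at_top"
proof -
  note sf = sq_facts[OF t]
  define c where "c = cc t"
  define s where "s = sq t"
  define P where "P = exp (- \<i> * of_real pi * x) / (2 * \<i> * sin (of_real pi * x) * Gamma (- x))"
  have c: "Re c > 0" using sf by (simp add: c_def)
  have hi: "hankel_integrand x t = (\<lambda>z. (1 / s) * Fh c x z)"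
  proof
    fix z
    have "exp z * exp (z * (1 - sq t)) = exp ((2 - sq t) * z)"
      by (simp add: exp_add[symmetric] algebra_simps)
    thus "hankel_integrand x t z = (1 / s) * Fh c x z"
      unfolding hankel_integrand_def Fh_def c_def s_def cc_def sq_def[symmetric]
      by (simp add: field_simps)
  qed
  have ci: "contour_integral (hankel_path R) (hankel_integrand x t) = (1 / s) * Jh c x R" for R
    unfolding hi Jh_def by (rule contour_integral_lmul[OF int_Fh])
  have lim: "((\<lambda>R. P * ((1 / s) * Jh c x R)) \<longlongrightarrow> P * ((1 / s) * Lh c x)) at_top"
    by (intro tendsto_intros Jh_lim[OF c x])
  have g0: "Gamma (- x) \<noteq> 0"
  proof -
    have "- x \<notin> \<int>" using x by (metis Ints_minus minus_minus)
    hence "- x \<notin> \<int>\<^sub>\<le>\<^sub>0" using nonpos_Ints_Int by blast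
    thus ?thesis by (simp add: Gamma_eq_zero_iff)
  qed
  have s0: "sin (of_real pi * x) \<noteq> 0"
  proof
    assume "sin (of_real pi * x) = 0"
    then obtain n :: int where "of_real pi * x = of_real (of_int n * pi)" by (auto simp: sin_eq_0)
    hence "x = of_int n" by (simp add: field_simps)
    thus False using x by auto
  qed
  have e: "exp (- \<i> * of_real pi * x) * (exp (\<i> * of_real (2 * pi) * (x + 1)) - 1) = 2 * \<i> * sin (of_real pi * x)"
  proof -
    have "exp (- \<i> * of_real pi * x) * exp (\<i> * of_real (2 * pi) * (x + 1)) = exp (\<i> * (of_real pi * x) + \<i> * (of_int 1 * (of_real pi * 2)))"
      by (simp add: exp_add[symmetric] algebra_simps)
    also have "\<dots> = exp (\<i> * (of_real pi * x))" by (rule exp_plus_2pin)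
    finally have "exp (- \<i> * of_real pi * x) * exp (\<i> * of_real (2 * pi) * (x + 1)) = exp (\<i> * (of_real pi * x))" .
    moreover have "exp (- \<i> * of_real pi * x) = exp (- (\<i> * (of_real pi * x)))" by (simp add: algebra_simps)
    ultimately show ?thesis by (simp add: sin_exp_eq right_diff_distrib complex_i_mult_minus mult.assoc)
  qed
  have "P * ((1 / s) * Lh c x) = exp (x * Ln c) / s"
    unfolding P_def Lh_def using g0 s0 e by (simp add: field_simps)
  also have "\<dots> = gen_f x t" using gen_f_eq[OF t] by (simp add: FF_def c_def s_def)
  finally show ?thesis using lim unfolding ci P_def by simp
qed

lemma deriv_gen_f:
  assumes "norm t < 1/2"
  shows "deriv (gen_f x) t = deriv (FF x) t"
proof (rule deriv_cong_ev[OF _ refl])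
  have "eventually (\<lambda>u. u \<in> ball 0 (1/2)) (nhds t)"
    using assms by (intro eventually_nhds_in_open) auto
  thus "eventually (\<lambda>u. gen_f x u = FF x u) (nhds t)"
    by eventually_elim (simp add: gen_f_eq)
qed

theorem mainTheorem14:
  shows "(\<forall>x t. x \<notin> \<int> \<longrightarrow> norm t < 1/2 \<longrightarrow>
            ((\<lambda>R. exp (- \<i> * of_real pi * x) / (2 * \<i> * sin (of_real pi * x) * Gamma (- x))
                   * contour_integral (hankel_path R) (hankel_integrand x t))
              \<longlongrightarrow> gen_f x t) at_top)
       \<and> (\<forall>K. compact K \<longrightarrow> K \<subseteq> UNIV \<times> ball 0 (1/2) \<longrightarrow>
            uniform_limit K (\<lambda>N (x, t). \<Sum>n<N. theta_Delta n x * t ^ n / fact n)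
                            (\<lambda>(x, t). gen_f x t) sequentially)
       \<and> (\<forall>x t. norm t < 1/2 \<longrightarrow>
            deriv (gen_f (x + 1)) t - 2 * deriv (gen_f x) t + x * gen_f (x - 1) t = 0
          \<and> (1 - 2 * t) * deriv (gen_f x) t + (x - 1) * gen_f x t - 2 * x * gen_f (x - 1) t = 0)"
proof (intro conjI allI impI)
  fix x t :: complex
  assume "x \<notin> \<int>" "norm t < 1/2"
  thus "((\<lambda>R. exp (- \<i> * of_real pi * x) / (2 * \<i> * sin (of_real pi * x) * Gamma (- x))
                   * contour_integral (hankel_path R) (hankel_integrand x t))
              \<longlongrightarrow> gen_f x t) at_top" by (rule part_i)
next
  fix K :: "(complex \<times> complex) set"
  assume "compact K" "K \<subseteq> UNIV \<times> ball 0 (1/2)"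
  thus "uniform_limit K (\<lambda>N (x, t). \<Sum>n<N. theta_Delta n x * t ^ n / fact n)
                            (\<lambda>(x, t). gen_f x t) sequentially" by (rule unif_conv)
next
  fix x t :: complex
  assume t: "norm t < 1/2"
  show "deriv (gen_f (x + 1)) t - 2 * deriv (gen_f x) t + x * gen_f (x - 1) t = 0"
    using ODE1[OF t, of x] by (simp add: deriv_gen_f[OF t] gen_f_eq[OF t])
  show "(1 - 2 * t) * deriv (gen_f x) t + (x - 1) * gen_f x t - 2 * x * gen_f (x - 1) t = 0"
    using ODE2[OF t, of x] by (simp add: deriv_gen_f[OF t] gen_f_eq[OF t])
qed

end
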